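(* Suppose Assumptions 1–3 hold with $\kappa>2$, and let $0<\epsilon<\min\left(\frac{\kappa-2}{6(\kappa+1)},\frac1{15}\right)$. Then for any fixed $C>0$, uniformly in $z\in\mathbb C$ with $|z-x^*|\le Cn^{-1/3+\epsilon}$, as $n\to\infty$, \[G_{\mu_n}(z)=G_0+G_1(z-x^* )+\frac{G_2}{2}(z-x^* )^2+\mathcal O(n^{-2/3-2\epsilon}),\qquad G_{\mu_n}''(z)=G_2+\mathcal O(n^{-\epsilon}).\]
   Context: $\mu_n=\frac1n\sum_{j=1}^n\delta_{x_j^{(n)}}$ are probability measures (empirical measures of initial points) with distribution functions $F_n$. Assumption 1: the supports of all $\mu_n$ lie in a fixed bounded set, $\mu_n\to\mu$ weakly, $\mu$ has a density $\psi$ continuous on its support and $\psi(x)\sim c|x-x^*|^\kappa$ as $x\to x^*$ for some $x^*\in\mathbb R$, $c>0$. Assumption 2: $|F_n(x)-F(x)|\le M_0/n$ for all $x\in\mathbb R$, $n\ge n_0$, with $F$ the distribution function of $\mu$. Assumption 3: for some $m_0>0$ and all $n\ge n_0$, $[x^*-m_0n^{-1/(\kappa+1)},x^*+m_0n^{-1/(\kappa+1)}]$ does not meet the support of $\mu_n$. Notation: $G_\nu(z)=\int\frac{\nu(ds)}{z-s}$ (Stieltjes transform), $G_j:=G_\mu^{(j)}(x^* )=(-1)^jj!\int\frac{\mu(ds)}{(x^*-s)^{j+1}}$, $j=0,1,2,3$. *)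

theory Defs
  imports "HOL-Probability.Probability" "HOL-Library.Landau_Symbols"
begin

text \<open>Empirical data: the n-th configuration consists of the points x n 1, ..., x n n;
  the empirical measure is mu_n = (1/n) sum_j delta_{x n j}.\<close>

definition emp_cdf :: "(nat \<Rightarrow> nat \<Rightarrow> real) \<Rightarrow> nat \<Rightarrow> real \<Rightarrow> real" where
  "emp_cdf x n t = real (card {j \<in> {1..n}. x n j \<le> t}) / real n"

definition emp_int :: "(nat \<Rightarrow> nat \<Rightarrow> real) \<Rightarrow> nat \<Rightarrow> (real \<Rightarrow> real) \<Rightarrow> real" where
  "emp_int x n f = (\<Sum>j=1..n. f (x n j)) / real n"

definition emp_stieltjes :: "(nat \<Rightarrow> nat \<Rightarrow> real) \<Rightarrow> nat \<Rightarrow> complex \<Rightarrow> complex" where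
  "emp_stieltjes x n z = (\<Sum>j=1..n. 1 / (z - complex_of_real (x n j))) / of_nat n"

definition emp_weak_conv :: "(nat \<Rightarrow> nat \<Rightarrow> real) \<Rightarrow> real measure \<Rightarrow> bool" where
  "emp_weak_conv x M \<longleftrightarrow>
     (\<forall>f. continuous_on UNIV f \<and> bounded (range f) \<longrightarrow>
        (\<lambda>n. emp_int x n f) \<longlonglongrightarrow> integral\<^sup>L M f)"

definition msupp :: "real measure \<Rightarrow> real set" where
  "msupp M = {t. \<forall>e>0. emeasure M (ball t e) > 0}"

text \<open>G_j := G_mu^{(j)}(x*) = (-1)^j j! int mu(ds)/(x*-s)^{j+1}.\<close>
definition Gcoef :: "real measure \<Rightarrow> real \<Rightarrow> nat \<Rightarrow> real" where
  "Gcoef M xs j = (-1) ^ j * fact j * (\<integral>s. 1 / (xs - s) ^ (j + 1) \<partial>M)"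

end

theory Submission
  imports Defs
begin

lemma disc_nu:
  fixes \<nu> :: "real measure" and g g' :: "real \<Rightarrow> real"
  assumes fin: "finite_measure \<nu>" and sets: "sets \<nu> = sets borel" and ab: "a \<le> b"
   and der: "\<And>t. a \<le> t \<Longrightarrow> t \<le> b \<Longrightarrow> (g has_real_derivative g' t) (at t)"
   and cont: "continuous_on {a..b} g'" and neg: "\<And>t. a \<le> t \<Longrightarrow> t \<le> b \<Longrightarrow> g' t \<le> 0"
   and gm: "g' \<in> borel_measurable borel"
  shows "integrable \<nu> (\<lambda>s. indicator {a<..b} s * g s)"
    and "(\<integral>s. indicator {a<..b} s * g s \<partial>\<nu>) = g b * measure \<nu> {a<..b}
        + (\<integral>t. indicator {a..b} t * (- g' t) * measure \<nu> {a<..t} \<partial>lborel)"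
proof -
  interpret finite_measure \<nu> by (rule fin)
  interpret P: pair_sigma_finite \<nu> lborel
    by (simp add: lborel.sigma_finite_measure_axioms pair_sigma_finite.intro sigma_finite_measure_axioms)
  have mcong: "measurable \<nu> N = measurable borel N" for N :: "'b measure"
    using sets by (rule measurable_cong_sets) simp
  have gcont: "continuous_on {a..b} g"
    by (meson DERIV_isCont atLeastAtMost_iff continuous_at_imp_continuous_on der)
  have gdec: "g t \<le> g s" if "a \<le> s" "s \<le> t" "t \<le> b" for s t
    using DERIV_nonpos_imp_nonincreasing[of s t g] that der neg by force
  define m where "m = (\<lambda>t. measure \<nu> {a<..t})"
  have m_mono: "mono m" unfolding m_def
    by (intro monoI finite_measure_mono) (auto simp: sets)
  have m_meas: "m \<in> borel_measurable borel" by (rule borel_measurable_mono[OF m_mono])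
  have m_bd: "0 \<le> m t \<and> m t \<le> measure \<nu> (space \<nu>)" for t
    unfolding m_def using bounded_measure by auto
  obtain K where K: "K \<ge> 0" "\<And>t. t \<in> {a..b} \<Longrightarrow> norm (g' t) \<le> K"
    using continuous_on_compact_bound[OF compact_Icc cont] by blast
  define R where "R = (\<lambda>t. indicator {a..b} t * (- g' t) * m t)"
  have R_meas: "R \<in> borel_measurable borel"
    unfolding R_def using gm m_meas by measurable
  have Ib: "integrable lborel (\<lambda>t. indicator {a..b} t * (K * measure \<nu> (space \<nu>)))"
    using ab by (intro integrable_mult_left integrable_real_indicator) (auto simp: emeasure_lborel_Icc)
  have Rb: "AE x in lborel. norm (R x) \<le> norm (indicator {a..b} x * (K * measure \<nu> (space \<nu>)))"
  proof (intro AE_I2)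
    fix t show "norm (R t) \<le> norm (indicator {a..b} t * (K * measure \<nu> (space \<nu>)))"
      using K m_bd[of t] unfolding R_def
      by (auto simp: indicator_def abs_mult intro!: mult_mono)
  qed
  have R_int: "integrable lborel R"
    using Bochner_Integration.integrable_bound[OF Ib _ Rb] R_meas by simp
  have R_nonneg: "0 \<le> R t" for t
    unfolding R_def using neg[of t] m_bd[of t] by (auto simp: indicator_def mult_nonpos_nonneg)
  define H where "H = (\<lambda>s t. ennreal (indicator {a<..b} s * indicator {s..b} t * (- g' t)))"
  have Hm: "case_prod H \<in> borel_measurable (\<nu> \<Otimes>\<^sub>M lborel)"
  proof -
    note gm[measurable]
    have e: "(\<lambda>(s,t). indicator {a<..b} s * indicator {s..b} t * (- g' t)) = (\<lambda>(s::real,t::real). if a < s \<and> s \<le> b \<and> s \<le> t \<and> t \<le> b then - g' t else 0)"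
      by (auto simp: indicator_def fun_eq_iff)
    have "(\<lambda>(s::real,t::real). if a < s \<and> s \<le> b \<and> s \<le> t \<and> t \<le> b then - g' t else 0) \<in> borel_measurable (borel \<Otimes>\<^sub>M borel)"
      by measurable
    then have X1: "(\<lambda>(s,t). indicator {a<..b} s * indicator {s..b} t * (- g' t)) \<in> borel_measurable (borel \<Otimes>\<^sub>M borel)"
      unfolding e .
    have X2: "sets (\<nu> \<Otimes>\<^sub>M lborel) = sets (borel \<Otimes>\<^sub>M borel)"
      using sets by (intro sets_pair_measure_cong) auto
    have Eq: "borel_measurable (\<nu> \<Otimes>\<^sub>M lborel) = borel_measurable (borel \<Otimes>\<^sub>M borel)"
      by (rule measurable_cong_sets) (rule X2, rule refl)
    have "(\<lambda>(s,t). indicator {a<..b} s * indicator {s..b} t * (- g' t)) \<in> borel_measurable (\<nu> \<Otimes>\<^sub>M lborel)"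
      unfolding Eq using X1 .
    then show ?thesis unfolding H_def by measurable
  qed
  have inner_t: "(\<integral>\<^sup>+t. H s t \<partial>lborel) = ennreal (indicator {a<..b} s * (g s - g b))" for s
  proof (cases "s \<in> {a<..b}")
    case True
    have "((\<lambda>t. g' t) has_integral (g b - g s)) {s..b}"
    proof (rule fundamental_theorem_of_calculus)
      show "s \<le> b" using True by simp
      fix x assume "x \<in> {s..b}"
        then have "(g has_real_derivative g' x) (at x)" using True der by auto
        then show "(g has_vector_derivative g' x) (at x within {s..b})"
          using has_real_derivative_iff_has_vector_derivative has_field_derivative_at_within by blast
    qed
    from has_integral_neg[OF this] have "((\<lambda>t. - g' t) has_integral (g s - g b)) {s..b}"
      by simp
    then have "(\<integral>\<^sup>+t. ennreal (- g' t) * indicator {s..b} t \<partial>lborel) = ennreal (g s - g b)"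
      using True neg by (intro nn_integral_has_integral_lebesgue') auto
    moreover have "H s t = ennreal (- g' t) * indicator {s..b} t" for t
      using True unfolding H_def by (auto simp: indicator_def)
    ultimately show ?thesis using True by simp
  next
    case False
    then have "H s t = 0" for t unfolding H_def by (auto simp: indicator_def)
    then show ?thesis using False by simp
  qed
  have inner_s: "(\<integral>\<^sup>+s. H s t \<partial>\<nu>) = ennreal (R t)" for t
  proof -
    have "H s t = ennreal (indicator {a..b} t * (- g' t)) * indicator {a<..t} s" for s
      unfolding H_def by (auto simp: indicator_def)
    then have "(\<integral>\<^sup>+s. H s t \<partial>\<nu>) = ennreal (indicator {a..b} t * (- g' t)) * emeasure \<nu> {a<..t}"
      by (simp add: nn_integral_cmult_indicator sets)
    also have "\<dots> = ennreal (R t)"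
      unfolding R_def m_def using neg[of t]
      by (auto simp: emeasure_eq_measure ennreal_mult[symmetric] indicator_def)
    finally show ?thesis .
  qed
  have "(\<integral>\<^sup>+s. ennreal (indicator {a<..b} s * (g s - g b)) \<partial>\<nu>) = (\<integral>\<^sup>+t. ennreal (R t) \<partial>lborel)"
    using P.Fubini'[OF Hm] inner_t inner_s by simp
  also have "\<dots> = ennreal (integral\<^sup>L lborel R)"
    using R_int R_nonneg by (intro nn_integral_eq_integral) auto
  finally have eq: "(\<integral>\<^sup>+s. ennreal (indicator {a<..b} s * (g s - g b)) \<partial>\<nu>) = ennreal (integral\<^sup>L lborel R)" .
  have gm2: "(\<lambda>s. indicator {a<..b} s * g s) \<in> borel_measurable borel"
  proof -
    have "(\<lambda>x. indicator {a..b} x *\<^sub>R g x) \<in> borel_measurable borel"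
      by (intro borel_measurable_continuous_on_indicator gcont) auto
    then have "(\<lambda>x. indicator {a<..b} x * (indicator {a..b} x *\<^sub>R g x)) \<in> borel_measurable borel"
      by measurable
    moreover have "(\<lambda>x. indicator {a<..b} x * (indicator {a..b} x *\<^sub>R g x)) = (\<lambda>s. indicator {a<..b} s * g s)"
      by (auto simp: indicator_def fun_eq_iff)
    ultimately show ?thesis by simp
  qed
  have int1: "integrable \<nu> (\<lambda>s. indicator {a<..b} s * (g s - g b))"
    and val1: "(\<integral>s. indicator {a<..b} s * (g s - g b) \<partial>\<nu>) = integral\<^sup>L lborel R"
  proof -
    have "(\<lambda>s. indicator {a<..b} s * (g s - g b)) \<in> borel_measurable \<nu>"
      using gm2 unfolding mcong by (simp add: right_diff_distrib)
    moreover have "AE s in \<nu>. 0 \<le> indicator {a<..b} s * (g s - g b)"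
      using gdec by (auto simp: indicator_def)
    moreover have "0 \<le> integral\<^sup>L lborel R" using R_nonneg by (simp add: integral_nonneg_AE)
    ultimately have "integrable \<nu> (\<lambda>s. indicator {a<..b} s * (g s - g b)) \<and>
       (\<integral>s. indicator {a<..b} s * (g s - g b) \<partial>\<nu>) = integral\<^sup>L lborel R"
      using nn_integral_eq_integrable eq by blast
    then show "integrable \<nu> (\<lambda>s. indicator {a<..b} s * (g s - g b))"
      "(\<integral>s. indicator {a<..b} s * (g s - g b) \<partial>\<nu>) = integral\<^sup>L lborel R" by auto
  qed
  have int2: "integrable \<nu> (\<lambda>s. indicator {a<..b} s * g b)"
    by (intro integrable_mult_left integrable_real_indicator) (auto simp: sets emeasure_eq_measure)
  have split: "(\<lambda>s. indicator {a<..b} s * g s) = (\<lambda>s. indicator {a<..b} s * (g s - g b) + indicator {a<..b} s * g b)"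
    by (auto simp: fun_eq_iff algebra_simps)
  show "integrable \<nu> (\<lambda>s. indicator {a<..b} s * g s)"
    unfolding split using int1 int2 by auto
  have "(\<integral>s. indicator {a<..b} s * g s \<partial>\<nu>) = (\<integral>s. indicator {a<..b} s * (g s - g b) \<partial>\<nu>) + (\<integral>s. indicator {a<..b} s * g b \<partial>\<nu>)"
    unfolding split using int1 int2 by (rule Bochner_Integration.integral_add)
  also have "(\<integral>s. indicator {a<..b} s * g b \<partial>\<nu>) = g b * measure \<nu> {a<..b}"
    by (simp add: sets mult.commute)
  finally show "(\<integral>s. indicator {a<..b} s * g s \<partial>\<nu>) = g b * measure \<nu> {a<..b}
        + (\<integral>t. indicator {a..b} t * (- g' t) * measure \<nu> {a<..t} \<partial>lborel)"
    using val1 unfolding R_def m_def by simp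
qed

lemma int_bd:
  fixes g' h :: "real \<Rightarrow> real"
  assumes cont: "continuous_on {a..b} g'" and gm: "g' \<in> borel_measurable borel"
    and hm: "h \<in> borel_measurable borel" and hb: "\<And>t. a \<le> t \<Longrightarrow> t \<le> b \<Longrightarrow> \<bar>h t\<bar> \<le> B"
  shows "integrable lborel (\<lambda>t. indicator {a..b} t * (- g' t) * h t)"
proof -
  obtain K where K: "K \<ge> 0" "\<And>t. t \<in> {a..b} \<Longrightarrow> norm (g' t) \<le> K"
    using continuous_on_compact_bound[OF compact_Icc cont] by blast
  have Ib: "integrable lborel (\<lambda>t. indicator {a..b} t * (K * B))"
  proof (cases "a \<le> b")
    case True then show ?thesis
      by (intro integrable_mult_left integrable_real_indicator) (auto simp: emeasure_lborel_Icc)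
  next
    case False then have "{a..b} = {}" by auto
    then show ?thesis by simp
  qed
  have Rb: "AE x in lborel. norm (indicator {a..b} x * (- g' x) * h x) \<le> norm (indicator {a..b} x * (K * B))"
  proof (intro AE_I2)
    fix t show "norm (indicator {a..b} t * (- g' t) * h t) \<le> norm (indicator {a..b} t * (K * B))"
      using K(2)[of t] hb[of t] K(1)
      by (auto simp: indicator_def abs_mult intro!: mult_mono)
  qed
  have "(\<lambda>t. indicator {a..b} t * (- g' t) * h t) \<in> borel_measurable lborel"
    using gm hm by simp
  then show ?thesis
    using Bochner_Integration.integrable_bound[OF Ib _ Rb] by simp
qed

lemma disc_emp:
  fixes y :: "nat \<Rightarrow> real" and g g' :: "real \<Rightarrow> real" and J :: "nat set"
  assumes fJ: "finite J" and ab: "a \<le> b"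
   and der: "\<And>t. a \<le> t \<Longrightarrow> t \<le> b \<Longrightarrow> (g has_real_derivative g' t) (at t)"
   and cont: "continuous_on {a..b} g'"
   and gm: "g' \<in> borel_measurable borel"
  shows "(\<Sum>j\<in>J. indicator {a<..b} (y j) * g (y j)) = g b * real (card {j\<in>J. a < y j \<and> y j \<le> b})
     + (\<integral>t. indicator {a..b} t * (- g' t) * real (card {j\<in>J. a < y j \<and> y j \<le> t}) \<partial>lborel)"
proof -
  define f where "f = (\<lambda>j t. indicator {a<..b} (y j) * (indicator {y j..b} t * (- g' t)))"
  have fint: "integrable lborel (f j)" for j
  proof (cases "y j \<in> {a<..b}")
    case True
    have "continuous_on {y j..b} g'" using cont True by (auto intro: continuous_on_subset)
    then have "integrable lborel (\<lambda>t. indicator {y j..b} t *\<^sub>R g' t)"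
      using borel_integrable_atLeastAtMost' unfolding set_integrable_def by blast
    then show ?thesis unfolding f_def by simp
  next
    case False then show ?thesis unfolding f_def by simp
  qed
  have fval: "(\<integral>t. f j t \<partial>lborel) = indicator {a<..b} (y j) * (g (y j) - g b)" for j
  proof (cases "y j \<in> {a<..b}")
    case True
    have "(\<integral>t. indicator {y j..b} t *\<^sub>R g' t \<partial>lborel) = g b - g (y j)"
    proof (rule integral_FTC_atLeastAtMost)
      show "y j \<le> b" using True by simp
      show "continuous_on {y j..b} g'" using cont True by (auto intro: continuous_on_subset)
      fix x assume "y j \<le> x" "x \<le> b"
      then have "(g has_real_derivative g' x) (at x)" using True der by auto
      then show "(g has_vector_derivative g' x) (at x within {y j..b})"
        using has_real_derivative_iff_has_vector_derivative has_field_derivative_at_within by blast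
    qed
    then show ?thesis using True unfolding f_def by simp
  next
    case False then show ?thesis unfolding f_def by simp
  qed
  have pw: "(\<Sum>j\<in>J. f j t) = indicator {a..b} t * (- g' t) * real (card {j\<in>J. a < y j \<and> y j \<le> t})" for t
  proof -
    have "(\<Sum>j\<in>J. f j t) = (\<Sum>j\<in>J. (if a < y j \<and> y j \<le> t then indicator {a..b} t * (- g' t) else 0))"
      unfolding f_def by (intro sum.cong refl) (auto simp: indicator_def)
    also have "\<dots> = (\<Sum>j\<in>{j\<in>J. a < y j \<and> y j \<le> t}. indicator {a..b} t * (- g' t))"
      by (rule sum.inter_filter[OF fJ, symmetric])
    also have "\<dots> = indicator {a..b} t * (- g' t) * real (card {j\<in>J. a < y j \<and> y j \<le> t})"
      by simp
    finally show ?thesis .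
  qed
  have "(\<Sum>j\<in>J. indicator {a<..b} (y j) * g (y j))
      = (\<Sum>j\<in>J. indicator {a<..b} (y j) * g b) + (\<Sum>j\<in>J. \<integral>t. f j t \<partial>lborel)"
    unfolding fval by (simp add: sum.distrib[symmetric] algebra_simps)
  also have "(\<Sum>j\<in>J. indicator {a<..b} (y j) * g b) = g b * real (card {j\<in>J. a < y j \<and> y j \<le> b})"
  proof -
    have "(\<Sum>j\<in>J. indicator {a<..b} (y j) * g b) = (\<Sum>j\<in>J. (if a < y j \<and> y j \<le> b then g b else 0))"
      by (intro sum.cong refl) (auto simp: indicator_def)
    also have "\<dots> = (\<Sum>j\<in>{j\<in>J. a < y j \<and> y j \<le> b}. g b)"
      by (rule sum.inter_filter[OF fJ, symmetric])
    finally show ?thesis by simp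
  qed
  also have "(\<Sum>j\<in>J. \<integral>t. f j t \<partial>lborel) = (\<integral>t. (\<Sum>j\<in>J. f j t) \<partial>lborel)"
    using fint by (intro Bochner_Integration.integral_sum[symmetric]) auto
  also have "\<dots> = (\<integral>t. indicator {a..b} t * (- g' t) * real (card {j\<in>J. a < y j \<and> y j \<le> t}) \<partial>lborel)"
    unfolding pw ..
  finally show ?thesis .
qed

lemma disc:
  fixes \<nu> :: "real measure" and y :: "nat \<Rightarrow> real" and g g' :: "real \<Rightarrow> real" and S :: "real set"
  assumes fin: "finite_measure \<nu>" and sets: "sets \<nu> = sets borel" and ab: "a \<le> b"
   and der: "\<And>t. a \<le> t \<Longrightarrow> t \<le> b \<Longrightarrow> (g has_real_derivative g' t) (at t)"
   and cont: "continuous_on {a..b} g'" and neg: "\<And>t. a \<le> t \<Longrightarrow> t \<le> b \<Longrightarrow> g' t \<le> 0"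
   and gm: "g' \<in> borel_measurable borel" and gb: "0 \<le> g b"
   and n: "n > 0" and fS: "finite S" and bS: "b \<notin> S"
   and hyp: "\<And>t. a \<le> t \<Longrightarrow> t \<le> b \<Longrightarrow> t \<notin> S \<Longrightarrow>
       \<bar>real (card {j\<in>{1..n}. a < y j \<and> y j \<le> t}) / real n - measure \<nu> {a<..t}\<bar> \<le> \<eta>"
  shows "\<bar>(\<Sum>j=1..n. indicator {a<..b} (y j) * g (y j)) / real n - (\<integral>s. indicator {a<..b} s * g s \<partial>\<nu>)\<bar> \<le> \<eta> * g a"
proof -
  interpret finite_measure \<nu> by (rule fin)
  define c where "c = (\<lambda>t. real (card {j\<in>{1..n}. a < y j \<and> y j \<le> t}) / real n)"
  define m where "m = (\<lambda>t. measure \<nu> {a<..t})"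
  have c_mono: "mono c" unfolding c_def
    by (intro monoI divide_right_mono of_nat_mono card_mono) auto
  have c_meas: "c \<in> borel_measurable borel" by (rule borel_measurable_mono[OF c_mono])
  have c_bd: "\<bar>c t\<bar> \<le> 1" for t
  proof -
    have "card {j\<in>{1..n}. a < y j \<and> y j \<le> t} \<le> card {1..n}" by (intro card_mono) auto
    then show ?thesis unfolding c_def using n by (auto simp: divide_le_eq)
  qed
  have m_mono: "mono m" unfolding m_def
    by (intro monoI finite_measure_mono) (auto simp: sets)
  have m_meas: "m \<in> borel_measurable borel" by (rule borel_measurable_mono[OF m_mono])
  have m_bd: "\<bar>m t\<bar> \<le> measure \<nu> (space \<nu>)" for t
    unfolding m_def using bounded_measure by auto
  have int_c: "integrable lborel (\<lambda>t. indicator {a..b} t * (- g' t) * c t)"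
    using c_bd by (intro int_bd[OF cont gm c_meas]) auto
  have int_m: "integrable lborel (\<lambda>t. indicator {a..b} t * (- g' t) * m t)"
    using m_bd by (intro int_bd[OF cont gm m_meas]) auto
  have int_e: "integrable lborel (\<lambda>t. indicator {a..b} t * (- g' t) * \<eta>)"
    by (intro int_bd[OF cont gm, of "\<lambda>_. \<eta>" "\<bar>\<eta>\<bar>"]) auto
  have E: "(\<Sum>j=1..n. indicator {a<..b} (y j) * g (y j)) / real n
     = g b * c b + (\<integral>t. indicator {a..b} t * (- g' t) * c t \<partial>lborel)"
  proof -
    have "(\<Sum>j=1..n. indicator {a<..b} (y j) * g (y j)) = g b * real (card {j\<in>{1..n}. a < y j \<and> y j \<le> b})
     + (\<integral>t. indicator {a..b} t * (- g' t) * real (card {j\<in>{1..n}. a < y j \<and> y j \<le> t}) \<partial>lborel)"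
      by (rule disc_emp[OF finite_atLeastAtMost ab der cont gm])
    then have "(\<Sum>j=1..n. indicator {a<..b} (y j) * g (y j)) / real n = g b * real (card {j\<in>{1..n}. a < y j \<and> y j \<le> b}) / real n
     + (\<integral>t. indicator {a..b} t * (- g' t) * real (card {j\<in>{1..n}. a < y j \<and> y j \<le> t}) \<partial>lborel) / real n"
      by (simp only: add_divide_distrib)
    also have "g b * real (card {j\<in>{1..n}. a < y j \<and> y j \<le> b}) / real n = g b * c b"
      unfolding c_def by simp
    also have "(\<integral>t. indicator {a..b} t * (- g' t) * real (card {j\<in>{1..n}. a < y j \<and> y j \<le> t}) \<partial>lborel) / real n
        = (\<integral>t. indicator {a..b} t * (- g' t) * real (card {j\<in>{1..n}. a < y j \<and> y j \<le> t}) / real n \<partial>lborel)"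
      by (rule integral_divide_zero[symmetric])
    also have "\<dots> = (\<integral>t. indicator {a..b} t * (- g' t) * c t \<partial>lborel)"
      unfolding c_def by simp
    finally show ?thesis .
  qed
  have I: "(\<integral>s. indicator {a<..b} s * g s \<partial>\<nu>) = g b * m b + (\<integral>t. indicator {a..b} t * (- g' t) * m t \<partial>lborel)"
    unfolding m_def by (rule disc_nu(2)[OF fin sets ab der cont neg gm])
  have eta: "0 \<le> \<eta>" using hyp[of b] ab bS by (meson abs_ge_zero order_trans order_refl)
  have diff: "(\<integral>t. indicator {a..b} t * (- g' t) * c t \<partial>lborel) - (\<integral>t. indicator {a..b} t * (- g' t) * m t \<partial>lborel)
     = (\<integral>t. indicator {a..b} t * (- g' t) * (c t - m t) \<partial>lborel)"
    using int_c int_m by (subst Bochner_Integration.integral_diff[symmetric]) (auto simp: algebra_simps)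
  have AEb: "AE t in lborel. \<bar>indicator {a..b} t * (- g' t) * (c t - m t)\<bar> \<le> indicator {a..b} t * (- g' t) * \<eta>"
  proof -
    have "AE t in lborel. t \<notin> S"
      by (intro AE_not_in countable_imp_null_set_lborel countable_finite fS)
    then show ?thesis
    proof (rule AE_mp, intro AE_I2 impI)
      fix t assume tS: "t \<notin> S"
      show "\<bar>indicator {a..b} t * (- g' t) * (c t - m t)\<bar> \<le> indicator {a..b} t * (- g' t) * \<eta>"
      proof (cases "t \<in> {a..b}")
        case True
        then have "\<bar>c t - m t\<bar> \<le> \<eta>" using hyp[of t] tS unfolding c_def m_def by auto
        moreover have "0 \<le> - g' t" using neg True by auto
        ultimately show ?thesis using True by (auto simp: abs_mult intro: mult_left_mono_neg)
      qed simp
    qed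
  qed
  have bnd: "\<bar>\<integral>t. indicator {a..b} t * (- g' t) * (c t - m t) \<partial>lborel\<bar> \<le> (\<integral>t. indicator {a..b} t * (- g' t) * \<eta> \<partial>lborel)"
  proof -
    have "\<bar>\<integral>t. indicator {a..b} t * (- g' t) * (c t - m t) \<partial>lborel\<bar> \<le> (\<integral>t. \<bar>indicator {a..b} t * (- g' t) * (c t - m t)\<bar> \<partial>lborel)"
      by (rule integral_abs_bound)
    also have "\<dots> \<le> (\<integral>t. indicator {a..b} t * (- g' t) * \<eta> \<partial>lborel)"
    proof (rule integral_mono_AE[OF _ int_e AEb])
      have "integrable lborel (\<lambda>t. indicator {a..b} t * (- g' t) * (c t - m t))"
        using int_c int_m by (simp add: algebra_simps)
      then show "integrable lborel (\<lambda>t. \<bar>indicator {a..b} t * (- g' t) * (c t - m t)\<bar>)" by simp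
    qed
    finally show ?thesis .
  qed
  have ftc: "(\<integral>t. indicator {a..b} t *\<^sub>R g' t \<partial>lborel) = g b - g a"
  proof (rule integral_FTC_atLeastAtMost[OF ab _ cont])
    fix x assume "a \<le> x" "x \<le> b"
    then have "(g has_real_derivative g' x) (at x)" using der by auto
    then show "(g has_vector_derivative g' x) (at x within {a..b})"
      using has_real_derivative_iff_has_vector_derivative has_field_derivative_at_within by blast
  qed
  have eint: "(\<integral>t. indicator {a..b} t * (- g' t) * \<eta> \<partial>lborel) = \<eta> * (g a - g b)"
  proof -
    have "(\<integral>t. indicator {a..b} t * (- g' t) * \<eta> \<partial>lborel) = (\<integral>t. (- \<eta>) * (indicator {a..b} t *\<^sub>R g' t) \<partial>lborel)"
      by (intro Bochner_Integration.integral_cong refl) (simp add: algebra_simps)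
    also have "\<dots> = (- \<eta>) * (g b - g a)" by (simp only: integral_mult_right_zero ftc)
    finally show ?thesis by (simp add: algebra_simps)
  qed
  have "(\<Sum>j=1..n. indicator {a<..b} (y j) * g (y j)) / real n - (\<integral>s. indicator {a<..b} s * g s \<partial>\<nu>)
     = g b * (c b - m b) + (\<integral>t. indicator {a..b} t * (- g' t) * (c t - m t) \<partial>lborel)"
    unfolding E I diff[symmetric] by (simp add: algebra_simps)
  moreover have "\<bar>g b * (c b - m b)\<bar> \<le> g b * \<eta>"
    using hyp[of b] ab bS gb unfolding c_def m_def by (auto simp: abs_mult intro: mult_left_mono)
  ultimately have "\<bar>(\<Sum>j=1..n. indicator {a<..b} (y j) * g (y j)) / real n - (\<integral>s. indicator {a<..b} s * g s \<partial>\<nu>)\<bar>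
     \<le> g b * \<eta> + \<eta> * (g a - g b)"
    using bnd eint by (smt (verit))
  then show ?thesis by (simp add: algebra_simps)
qed

lemma ev_powr_small:
  assumes "e < 0" "0 < D"
  shows "\<exists>N. \<forall>n\<ge>N. m * real n powr e \<le> D"
proof -
  have "((\<lambda>n. m * real n powr e) \<longlongrightarrow> 0) sequentially"
    by (intro tendsto_mult_right_zero tendsto_neg_powr[OF assms(1)] filterlim_real_sequentially)
  then have "eventually (\<lambda>n. m * real n powr e < D) sequentially"
    using assms(2) by (rule order_tendstoD)
  then show ?thesis unfolding eventually_sequentially by (meson less_imp_le)
qed

lemma Kside:
  fixes \<nu> :: "real measure" and y :: "nat \<Rightarrow> nat \<Rightarrow> real" and S :: "nat \<Rightarrow> real set"
  assumes fin: "finite_measure \<nu>" and sets: "sets \<nu> = sets borel"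
    and q: "0 < q" and al: "al * (\<kappa> + 1) = 1" "0 < al" and m0: "0 < m0" and xsB: "xs < B"
    and rho: "0 < \<rho>"
    and gapI: "\<And>\<delta>. 0 < \<delta> \<Longrightarrow> \<delta> \<le> \<rho> \<Longrightarrow> integrable \<nu> (\<lambda>s. indicator {xs<..xs+\<delta>} s * (s - xs) powr (-q))
        \<and> (\<integral>s. indicator {xs<..xs+\<delta>} s * (s - xs) powr (-q) \<partial>\<nu>) \<le> Cg * \<delta> powr (\<kappa> + 1 - q)"
    and supp: "emeasure \<nu> {B<..} = 0"
    and ptsB: "\<And>n j. j \<in> {1..n} \<Longrightarrow> y n j \<le> B"
    and ptsgap: "\<And>n j. n \<ge> N0 \<Longrightarrow> j \<in> {1..n} \<Longrightarrow> xs < y n j \<Longrightarrow> xs + m0 * real n powr (-al) < y n j"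
    and cdf: "\<And>n t. n \<ge> N0 \<Longrightarrow> xs + m0 * real n powr (-al) \<le> t \<Longrightarrow> t \<le> B \<Longrightarrow> t \<notin> S n \<Longrightarrow>
        \<bar>real (card {j\<in>{1..n}. xs + m0 * real n powr (-al) < y n j \<and> y n j \<le> t}) / real n
          - measure \<nu> {xs + m0 * real n powr (-al)<..t}\<bar> \<le> 2 * M0 / real n"
    and fS: "\<And>n. finite (S n)" and BS: "\<And>n. B \<notin> S n"
  shows "integrable \<nu> (\<lambda>s. indicator {xs<..} s * (s - xs) powr (-q))"
    and "\<exists>K N. \<forall>n\<ge>N. \<bar>(\<Sum>j=1..n. indicator {xs<..} (y n j) * (y n j - xs) powr (-q)) / real n
          - (\<integral>s. indicator {xs<..} s * (s - xs) powr (-q) \<partial>\<nu>)\<bar> \<le> K * real n powr (-1 + q * al)"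
proof -
  interpret finite_measure \<nu> by (rule fin)
  obtain N1 where N1: "\<And>n. n \<ge> N1 \<Longrightarrow> m0 * real n powr (-al) \<le> min \<rho> (B - xs)"
    using ev_powr_small[of "-al" "min \<rho> (B - xs)" m0] al rho xsB by auto
  define N where "N = max (max N0 N1) 1"
  define g where "g = (\<lambda>s::real. (s - xs) powr (-q))"
  define g' where "g' = (\<lambda>s::real. - q * (s - xs) powr (-q - 1))"
  have null: "{B<..} \<in> null_sets \<nu>" using supp sets by auto
  have AEB: "AE s in \<nu>. s \<notin> {B<..}" by (rule AE_not_in[OF null])
  have I3: "integrable \<nu> (\<lambda>s. indicator {B<..} s * g s)" and V3: "(\<integral>s. indicator {B<..} s * g s \<partial>\<nu>) = 0"
  proof -
    have "AE s in \<nu>. indicator {B<..} s * g s = 0" using AEB by eventually_elim simp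
    moreover have mc: "(borel_measurable \<nu> :: (real \<Rightarrow> real) set) = borel_measurable borel" by (rule measurable_cong_sets[OF sets refl])
    moreover have "(\<lambda>s. indicator {B<..} s * g s) \<in> borel_measurable borel" unfolding g_def by measurable
    ultimately have meas: "(\<lambda>s. indicator {B<..} s * g s) \<in> borel_measurable \<nu>" by simp
    show "integrable \<nu> (\<lambda>s. indicator {B<..} s * g s)"
      using integrable_cong_AE[OF meas _ \<open>AE s in \<nu>. indicator {B<..} s * g s = 0\<close>] by simp
    show "(\<integral>s. indicator {B<..} s * g s \<partial>\<nu>) = 0"
      using integral_cong_AE[OF meas _ \<open>AE s in \<nu>. indicator {B<..} s * g s = 0\<close>] by simp
  qed
  have main: "integrable \<nu> (\<lambda>s. indicator {xs<..} s * g s) \<and>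
     \<bar>(\<Sum>j=1..n. indicator {xs<..} (y n j) * g (y n j)) / real n
          - (\<integral>s. indicator {xs<..} s * g s \<partial>\<nu>)\<bar> \<le> 2 * M0 / real n * (m0 * real n powr (-al)) powr (-q)
            + Cg * (m0 * real n powr (-al)) powr (\<kappa> + 1 - q)" if n: "n \<ge> N" for n
  proof -
    define \<delta> where "\<delta> = m0 * real n powr (-al)"
    define a where "a = xs + \<delta>"
    have npos: "0 < n" using n unfolding N_def by auto
    have dpos: "0 < \<delta>" unfolding \<delta>_def using m0 npos by auto
    have dle: "\<delta> \<le> \<rho>" "\<delta> \<le> B - xs" using N1[of n] n unfolding N_def \<delta>_def by auto
    have aB: "a \<le> B" using dle unfolding a_def by simp
    have der: "(g has_real_derivative g' t) (at t)" if "a \<le> t" "t \<le> B" for t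
    proof -
      have "t - xs > 0" using that dpos unfolding a_def by simp
      from DERIV_fun_powr[OF DERIV_diff[OF DERIV_ident DERIV_const] this, of "-q"]
      show ?thesis unfolding g_def g'_def by simp
    qed
    have cont: "continuous_on {a..B} g'"
      unfolding g'_def using dpos unfolding a_def
      by (intro continuous_intros) auto
    have neg: "g' t \<le> 0" if "a \<le> t" "t \<le> B" for t
      unfolding g'_def using q by (simp add: mult_nonneg_nonneg)
    have gm: "g' \<in> borel_measurable borel" unfolding g'_def by measurable
    have gb: "0 \<le> g B" unfolding g_def by simp
    have D: "\<bar>(\<Sum>j=1..n. indicator {a<..B} (y n j) * g (y n j)) / real n - (\<integral>s. indicator {a<..B} s * g s \<partial>\<nu>)\<bar>
        \<le> 2 * M0 / real n * g a"
    proof (rule disc[OF fin sets aB der cont neg gm gb npos fS BS])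
      fix t assume "a \<le> t" "t \<le> B" "t \<notin> S n"
      then show "\<bar>real (card {j\<in>{1..n}. a < y n j \<and> y n j \<le> t}) / real n - measure \<nu> {a<..t}\<bar> \<le> 2 * M0 / real n"
        using cdf[of n t] n unfolding a_def \<delta>_def N_def by auto
    qed
    have I2: "integrable \<nu> (\<lambda>s. indicator {a<..B} s * g s)"
      by (rule disc_nu(1)[OF fin sets aB der cont neg gm])
    have G: "integrable \<nu> (\<lambda>s. indicator {xs<..a} s * g s)" "(\<integral>s. indicator {xs<..a} s * g s \<partial>\<nu>) \<le> Cg * \<delta> powr (\<kappa> + 1 - q)"
      using gapI[OF dpos dle(1)] unfolding a_def g_def by auto
    have G0: "0 \<le> (\<integral>s. indicator {xs<..a} s * g s \<partial>\<nu>)"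
      unfolding g_def by (intro integral_nonneg_AE) auto
    have split: "(\<lambda>s. indicator {xs<..} s * g s) = (\<lambda>s. indicator {xs<..a} s * g s + indicator {a<..B} s * g s + indicator {B<..} s * g s)"
      using aB dpos unfolding a_def by (auto simp: fun_eq_iff indicator_def)
    have int: "integrable \<nu> (\<lambda>s. indicator {xs<..} s * g s)"
      unfolding split using G(1) I2 I3 by auto
    have val: "(\<integral>s. indicator {xs<..} s * g s \<partial>\<nu>) = (\<integral>s. indicator {xs<..a} s * g s \<partial>\<nu>) + (\<integral>s. indicator {a<..B} s * g s \<partial>\<nu>)"
      unfolding split using G(1) I2 I3 V3 by simp
    have sums: "(\<Sum>j=1..n. indicator {xs<..} (y n j) * g (y n j)) = (\<Sum>j=1..n. indicator {a<..B} (y n j) * g (y n j))"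
    proof (intro sum.cong refl)
      fix j assume j: "j \<in> {1..n}"
      show "indicator {xs<..} (y n j) * g (y n j) = indicator {a<..B} (y n j) * g (y n j)"
        using ptsgap[of n j] ptsB[of j n] j n dpos unfolding N_def a_def \<delta>_def
        by (auto simp: indicator_def)
    qed
    have "\<bar>(\<Sum>j=1..n. indicator {xs<..} (y n j) * g (y n j)) / real n
          - (\<integral>s. indicator {xs<..} s * g s \<partial>\<nu>)\<bar> \<le> 2 * M0 / real n * g a + Cg * \<delta> powr (\<kappa> + 1 - q)"
      unfolding sums val using D G(2) G0 by linarith
    moreover have "g a = \<delta> powr (-q)" unfolding g_def a_def by simp
    ultimately show ?thesis using int unfolding \<delta>_def by simp
  qed
  show "integrable \<nu> (\<lambda>s. indicator {xs<..} s * (s - xs) powr (-q))"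
    using main[of N] unfolding g_def by simp
  define K where "K = 2 * M0 * m0 powr (-q) + Cg * m0 powr (\<kappa> + 1 - q)"
  have "\<bar>(\<Sum>j=1..n. indicator {xs<..} (y n j) * (y n j - xs) powr (-q)) / real n
          - (\<integral>s. indicator {xs<..} s * (s - xs) powr (-q) \<partial>\<nu>)\<bar> \<le> K * real n powr (-1 + q * al)" if n: "n \<ge> N" for n
  proof -
    have npos: "0 < real n" using n unfolding N_def by auto
    have e1: "2 * M0 / real n * (m0 * real n powr (-al)) powr (-q) = 2 * M0 * m0 powr (-q) * real n powr (-1 + q * al)"
    proof -
      have A: "(m0 * real n powr (-al)) powr (-q) = m0 powr (-q) * real n powr (q * al)"
        using npos m0 by (simp add: powr_mult powr_powr mult.commute)
      have B: "real n powr (q * al) / real n = real n powr (-1 + q * al)"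
        using npos by (simp add: powr_diff powr_one)
      have "2 * M0 / real n * (m0 * real n powr (-al)) powr (-q) = 2 * M0 * m0 powr (-q) * (real n powr (q * al) / real n)"
        unfolding A by simp
      then show ?thesis unfolding B .
    qed
    have e2: "(m0 * real n powr (-al)) powr (\<kappa> + 1 - q) = m0 powr (\<kappa> + 1 - q) * real n powr (-1 + q * al)"
    proof -
      have "(m0 * real n powr (-al)) powr (\<kappa> + 1 - q) = m0 powr (\<kappa> + 1 - q) * real n powr (- al * (\<kappa> + 1 - q))"
        using npos m0 by (simp add: powr_mult powr_powr)
      also have "- al * (\<kappa> + 1 - q) = -1 + q * al" using al(1) by (simp add: algebra_simps)
      finally show ?thesis .
    qed
    show ?thesis using main[OF n] unfolding g_def e1 e2 K_def by (simp add: algebra_simps)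
  qed
  then show "\<exists>K N. \<forall>n\<ge>N. \<bar>(\<Sum>j=1..n. indicator {xs<..} (y n j) * (y n j - xs) powr (-q)) / real n
          - (\<integral>s. indicator {xs<..} s * (s - xs) powr (-q) \<partial>\<nu>)\<bar> \<le> K * real n powr (-1 + q * al)"
    by blast
qed

lemma gap_nn:
  fixes \<phi> :: "real \<Rightarrow> real"
  assumes \<phi>m: "\<phi> \<in> borel_measurable borel" and \<phi>0: "\<And>t. 0 \<le> \<phi> t" and c: "0 < c"
    and bd: "\<And>t. xs < t \<Longrightarrow> t < xs + \<rho> \<Longrightarrow> \<phi> t \<le> 2 * c * (t - xs) powr \<kappa>"
    and q: "q < \<kappa> + 1" and \<delta>: "0 < \<delta>" "\<delta> < \<rho>"
  shows "(\<integral>\<^sup>+t. ennreal (indicator {xs<..xs+\<delta>} t * (t - xs) powr (-q) * \<phi> t) \<partial>lborel)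
      \<le> ennreal (2 * c / (\<kappa> + 1 - q) * \<delta> powr (\<kappa> + 1 - q))"
proof -
  have pw: "ennreal (indicator {xs<..xs+\<delta>} t * (t - xs) powr (-q) * \<phi> t)
      \<le> ennreal (2 * c) * ennreal (indicator {xs<..xs+\<delta>} t * (t - xs) powr (\<kappa> - q))" for t
  proof (cases "t \<in> {xs<..xs+\<delta>}")
    case True
    then have "\<phi> t \<le> 2 * c * (t - xs) powr \<kappa>" using bd \<delta> by auto
    then have "(t - xs) powr (-q) * \<phi> t \<le> (t - xs) powr (-q) * (2 * c * (t - xs) powr \<kappa>)"
      by (intro mult_left_mono) auto
    also have "\<dots> = 2 * c * (t - xs) powr (\<kappa> - q)"
      by (simp add: powr_add[symmetric] algebra_simps)
    finally show ?thesis using True c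
      by (simp add: ennreal_mult[symmetric] ennreal_leI)
  next
    case False then show ?thesis by simp
  qed
  have J: "(\<integral>\<^sup>+t. ennreal (indicator {xs<..xs+\<delta>} t * (t - xs) powr (\<kappa> - q)) \<partial>lborel)
      = ennreal (\<delta> powr (\<kappa> - q + 1) / (\<kappa> - q + 1))"
  proof -
    have "(\<integral>\<^sup>+t. ennreal (indicator {xs<..xs+\<delta>} t * (t - xs) powr (\<kappa> - q)) \<partial>lborel)
       = ennreal \<bar>1::real\<bar> * (\<integral>\<^sup>+x. ennreal (indicator {xs<..xs+\<delta>} (xs + 1 * x) * (xs + 1 * x - xs) powr (\<kappa> - q)) \<partial>lborel)"
      by (rule nn_integral_real_affine) auto
    also have "\<dots> = (\<integral>\<^sup>+x. ennreal (x powr (\<kappa> - q)) * indicator {0..\<delta>} x \<partial>lborel)"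
      by (simp only: abs_one ennreal_1 mult_1 mult_1_left, intro nn_integral_cong) (auto simp: indicator_def)
    also have "\<dots> = ennreal (\<delta> powr (\<kappa> - q + 1) / (\<kappa> - q + 1))"
      using q \<delta> by (intro nn_integral_has_integral_lebesgue' has_integral_powr_from_0) auto
    finally show ?thesis .
  qed
  have "(\<integral>\<^sup>+t. ennreal (indicator {xs<..xs+\<delta>} t * (t - xs) powr (-q) * \<phi> t) \<partial>lborel)
      \<le> (\<integral>\<^sup>+t. ennreal (2 * c) * ennreal (indicator {xs<..xs+\<delta>} t * (t - xs) powr (\<kappa> - q)) \<partial>lborel)"
    by (intro nn_integral_mono pw)
  also have "\<dots> = ennreal (2 * c) * ennreal (\<delta> powr (\<kappa> - q + 1) / (\<kappa> - q + 1))"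
    by (subst nn_integral_cmult) (auto simp: J)
  also have "\<dots> = ennreal (2 * c / (\<kappa> + 1 - q) * \<delta> powr (\<kappa> + 1 - q))"
    using c q by (simp add: ennreal_mult[symmetric] algebra_simps)
  finally show ?thesis .
qed

lemma small_le0:
  fixes v K :: real
  assumes "\<And>n. n \<ge> N \<Longrightarrow> v \<le> K / real n"
  shows "v \<le> 0"
proof (rule ccontr)
  assume v: "\<not> v \<le> 0"
  obtain m :: nat where m: "\<bar>K\<bar> / v < real m" using reals_Archimedean2 by blast
  define n where "n = max N (m + 1)"
  have n: "n \<ge> N" "real n > \<bar>K\<bar> / v" "real n > 0" using m unfolding n_def by auto
  have "K / real n < v"
  proof -
    have "K \<le> \<bar>K\<bar>" by simp
    also have "\<bar>K\<bar> < v * real n" using n(2) v by (simp add: divide_less_eq mult.commute)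
    finally show ?thesis using n(3) by (simp add: divide_less_eq)
  qed
  then show False using assms[OF n(1)] by simp
qed

locale L =
  fixes x :: "nat \<Rightarrow> nat \<Rightarrow> real" and M :: "real measure" and \<psi> :: "real \<Rightarrow> real"
    and xs c \<kappa> B0 M0 m0 \<rho> :: real and N0 :: nat
  assumes prob: "prob_space M" and dens: "M = density lborel (\<lambda>t. ennreal (\<psi> t))"
    and \<psi>m: "\<psi> \<in> borel_measurable borel" and \<psi>0: "\<And>t. \<psi> t \<ge> 0" and c: "c > 0"
    and bdd: "\<And>n j. j \<in> {1..n} \<Longrightarrow> \<bar>x n j\<bar> \<le> B0"
    and cdfb: "\<And>n t. n \<ge> N0 \<Longrightarrow> \<bar>emp_cdf x n t - measure M {..t}\<bar> \<le> M0 / real n"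
    and M0: "M0 \<ge> 0" and N0: "N0 \<ge> 1"
    and m0: "m0 > 0"
    and gap: "\<And>n j. n \<ge> N0 \<Longrightarrow> j \<in> {1..n} \<Longrightarrow>
        x n j \<notin> {xs - m0 * real n powr (-1/(\<kappa>+1)) .. xs + m0 * real n powr (-1/(\<kappa>+1))}"
    and rho: "\<rho> > 0" and near: "\<And>t. t \<noteq> xs \<Longrightarrow> \<bar>t - xs\<bar> < \<rho> \<Longrightarrow> \<psi> t \<le> 2 * c * \<bar>t - xs\<bar> powr \<kappa>"
    and kappa: "\<kappa> > 2"
begin

lemma setsM: "sets M = sets borel" unfolding dens by simp

lemma finM: "finite_measure M"
  using prob prob_space.finite_measure by blast

lemma spaceM: "space M = UNIV" unfolding dens by simp

lemma dens_bound:
  assumes fm: "f \<in> borel_measurable borel" and f0: "\<And>t. 0 \<le> f t" and K: "0 \<le> K"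
    and bd: "(\<integral>\<^sup>+t. ennreal (f t * \<psi> t) \<partial>lborel) \<le> ennreal K"
  shows "integrable M f \<and> (\<integral>s. f s \<partial>M) \<le> K"
proof -
  have nn: "(\<integral>\<^sup>+s. ennreal (f s) \<partial>M) = (\<integral>\<^sup>+t. ennreal (f t * \<psi> t) \<partial>lborel)"
    unfolding dens using fm \<psi>m
    by (subst nn_integral_density) (auto simp: ennreal_mult'[symmetric] \<psi>0 mult.commute)
  have fmM: "f \<in> borel_measurable M" unfolding dens using fm by simp
  have int: "integrable M f"
  proof (rule integrableI_nonneg[OF fmM])
    show "AE x in M. 0 \<le> f x" using f0 by simp
    show "(\<integral>\<^sup>+s. ennreal (f s) \<partial>M) < \<infinity>"
      unfolding nn infinity_ennreal_def using bd ennreal_less_top[of K] by (rule le_less_trans)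
  qed
  have "ennreal (\<integral>s. f s \<partial>M) = (\<integral>\<^sup>+s. ennreal (f s) \<partial>M)"
    using int f0 by (intro nn_integral_eq_integral[symmetric]) auto
  then have "ennreal (\<integral>s. f s \<partial>M) \<le> ennreal K" using nn bd by simp
  then show ?thesis using int K by simp
qed

lemma card_n: "card {1..n::nat} = n" by simp

lemma emp_all: "emp_cdf x n t = 1" if "t \<ge> B0" "n \<ge> 1"
proof -
  have "{j\<in>{1..n}. x n j \<le> t} = {1..n}"
  proof -
    { fix j assume "j \<in> {1..n}"
      then have "x n j \<le> t" using bdd[of j n] that abs_ge_self[of "x n j"] by linarith }
    then show ?thesis by auto
  qed
  then show ?thesis unfolding emp_cdf_def using that by simp
qed

lemma emp_none: "emp_cdf x n t = 0" if "t < - B0"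
proof -
  have "{j\<in>{1..n}. x n j \<le> t} = {}"
  proof -
    { fix j assume "j \<in> {1..n}" "x n j \<le> t"
      then have False using bdd[of j n] that by auto }
    then show ?thesis by auto
  qed
  then show ?thesis unfolding emp_cdf_def by simp
qed

lemma F_top: "measure M {..t} = 1" if "t \<ge> B0"
proof -
  interpret prob_space M by (rule prob)
  have "1 - measure M {..t} \<le> 0"
  proof (rule small_le0[of "N0" _ M0])
    fix n assume n: "n \<ge> N0"
    then have "\<bar>1 - measure M {..t}\<bar> \<le> M0 / real n" using cdfb[OF n, of t] emp_all[OF that, of n] N0 by auto
    then show "1 - measure M {..t} \<le> M0 / real n" by simp
  qed
  moreover have "measure M {..t} \<le> 1" by simp
  ultimately show ?thesis by simp
qed

lemma supp_right: "emeasure M {B<..} = 0" if "B \<ge> B0"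
proof -
  interpret prob_space M by (rule prob)
  have "measure M {B<..} = measure M (space M - {..B})" using spaceM by (intro arg_cong[where f="measure M"]) auto
  also have "\<dots> = 1 - measure M {..B}" by (rule prob_compl) (simp add: setsM)
  also have "\<dots> = 0" using F_top[OF that] by simp
  finally show ?thesis by (simp add: emeasure_eq_measure)
qed

lemma F_bot: "measure M {..t} = 0" if "t < - B0"
proof -
  have "measure M {..t} \<le> 0"
  proof (rule small_le0[of "N0" _ M0])
    fix n assume n: "n \<ge> N0"
    then show "measure M {..t} \<le> M0 / real n" using cdfb[OF n, of t] emp_none[OF that, of n] by auto
  qed
  then show ?thesis by (simp add: measure_nonneg antisym)
qed

lemma point0: "measure M {p} = 0"
proof -
  have "emeasure M {p} = (\<integral>\<^sup>+t. ennreal (\<psi> t) * indicator {p} t \<partial>lborel)"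
    unfolding dens using \<psi>m by (subst emeasure_density) auto
  also have "\<dots> = 0" by (rule nn_integral_null_set) auto
  finally show ?thesis by (simp add: measure_def)
qed

end

context L begin

lemma B0_nonneg: "0 \<le> B0" using bdd[of 1 1] by auto

lemma cnt_diff:
  fixes A B :: "nat \<Rightarrow> bool"
  assumes "\<And>j. B j \<Longrightarrow> A j"
  shows "real (card {j\<in>{1..n::nat}. A j \<and> \<not> B j}) = real (card {j\<in>{1..n}. A j}) - real (card {j\<in>{1..n}. B j})"
proof -
  have e: "{j\<in>{1..n::nat}. A j \<and> \<not> B j} = {j\<in>{1..n}. A j} - {j\<in>{1..n}. B j}" by auto
  have s: "{j\<in>{1..n}. B j} \<subseteq> {j\<in>{1..n}. A j}" using assms by auto
  then have "card {j\<in>{1..n}. B j} \<le> card {j\<in>{1..n}. A j}" by (intro card_mono) auto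
  then show ?thesis unfolding e using s by (simp add: card_Diff_subset of_nat_diff)
qed

lemma meas_ioc: "measure M {a<..t} = measure M {..t} - measure M {..a}" if "a \<le> t"
proof -
  interpret finite_measure M by (rule finM)
  have "{a<..t} = {..t} - {..a}" by auto
  then show ?thesis using that by (simp add: finite_measure_Diff setsM)
qed

lemma Rside:
  assumes q: "0 < q" "q < \<kappa> + 1"
  shows "integrable M (\<lambda>s. indicator {xs<..} s * (s - xs) powr (-q))"
    and "\<exists>K N. \<forall>n\<ge>N. \<bar>(\<Sum>j=1..n. indicator {xs<..} (x n j) * (x n j - xs) powr (-q)) / real n
          - (\<integral>s. indicator {xs<..} s * (s - xs) powr (-q) \<partial>M)\<bar> \<le> K * real n powr (-1 + q * (1/(\<kappa>+1)))"
proof -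
  define B where "B = B0 + 2 * \<bar>xs\<bar> + 1"
  define al where "al = 1 / (\<kappa> + 1)"
  have al: "al * (\<kappa> + 1) = 1" "0 < al" unfolding al_def using kappa by auto
  have hd: "real n powr (-al) = real n powr (-1/(\<kappa>+1))" for n unfolding al_def by simp
  have xsB: "xs < B" unfolding B_def using B0_nonneg by linarith
  have rho2: "0 < \<rho> / 2" using rho by simp
  have gapI: "integrable M (\<lambda>s. indicator {xs<..xs+\<delta>} s * (s - xs) powr (-q))
        \<and> (\<integral>s. indicator {xs<..xs+\<delta>} s * (s - xs) powr (-q) \<partial>M) \<le> 2 * c / (\<kappa> + 1 - q) * \<delta> powr (\<kappa> + 1 - q)"
    if d: "0 < \<delta>" "\<delta> \<le> \<rho> / 2" for \<delta>
  proof (rule dens_bound)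
    have bd: "\<psi> t \<le> 2 * c * (t - xs) powr \<kappa>" if "xs < t" "t < xs + \<rho>" for t
      using near[of t] that by auto
    show "(\<integral>\<^sup>+t. ennreal (indicator {xs<..xs+\<delta>} t * (t - xs) powr (-q) * \<psi> t) \<partial>lborel)
      \<le> ennreal (2 * c / (\<kappa> + 1 - q) * \<delta> powr (\<kappa> + 1 - q))"
      using d rho by (intro gap_nn[OF \<psi>m \<psi>0 c bd q(2)]) auto
    show "(\<lambda>s. indicator {xs<..xs+\<delta>} s * (s - xs) powr (-q)) \<in> borel_measurable borel" by measurable
    show "0 \<le> indicator {xs<..xs+\<delta>} t * (t - xs) powr (-q)" for t by simp
    show "0 \<le> 2 * c / (\<kappa> + 1 - q) * \<delta> powr (\<kappa> + 1 - q)" using c q by simp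
  qed
  have supp: "emeasure M {B<..} = 0" using B0_nonneg by (intro supp_right) (simp add: B_def)
  have ptsB: "x n j \<le> B" if "j \<in> {1..n}" for n j
    using bdd[OF that] unfolding B_def by (smt (verit))
  have ptsgap: "xs + m0 * real n powr (-al) < x n j" if "n \<ge> N0" "j \<in> {1..n}" "xs < x n j" for n j
  proof -
    have "0 \<le> m0 * real n powr (-al)" using m0 by simp
    then show ?thesis using gap[OF that(1,2)] that(3) unfolding hd by auto
  qed
  have cdf: "\<bar>real (card {j\<in>{1..n}. xs + m0 * real n powr (-al) < x n j \<and> x n j \<le> t}) / real n
          - measure M {xs + m0 * real n powr (-al)<..t}\<bar> \<le> 2 * M0 / real n"
    if n: "n \<ge> N0" and t: "xs + m0 * real n powr (-al) \<le> t" "t \<le> B" "t \<notin> {}" for n t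
  proof -
    define a where "a = xs + m0 * real n powr (-al)"
    have "real (card {j\<in>{1..n}. a < x n j \<and> x n j \<le> t}) = real (card {j\<in>{1..n}. x n j \<le> t}) - real (card {j\<in>{1..n}. x n j \<le> a})"
    proof -
      have "{j\<in>{1..n}. a < x n j \<and> x n j \<le> t} = {j\<in>{1..n}. x n j \<le> t \<and> \<not> x n j \<le> a}" by auto
      then show ?thesis using cnt_diff[of "\<lambda>j. x n j \<le> a" "\<lambda>j. x n j \<le> t" n] t unfolding a_def by auto
    qed
    then have "real (card {j\<in>{1..n}. a < x n j \<and> x n j \<le> t}) / real n = emp_cdf x n t - emp_cdf x n a"
      unfolding emp_cdf_def by (simp add: diff_divide_distrib)
    moreover have "measure M {a<..t} = measure M {..t} - measure M {..a}"
      using t unfolding a_def by (intro meas_ioc) simp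
    ultimately have "\<bar>real (card {j\<in>{1..n}. a < x n j \<and> x n j \<le> t}) / real n - measure M {a<..t}\<bar>
        \<le> \<bar>emp_cdf x n t - measure M {..t}\<bar> + \<bar>emp_cdf x n a - measure M {..a}\<bar>" by simp
    also have "\<dots> \<le> M0 / real n + M0 / real n" by (intro add_mono cdfb n)
    finally show ?thesis unfolding a_def by simp
  qed
  note K = Kside[where S="\<lambda>_. {}", OF finM setsM q(1) al m0 xsB rho2 gapI supp ptsB ptsgap cdf]
  show "integrable M (\<lambda>s. indicator {xs<..} s * (s - xs) powr (-q))" using K(1) by simp
  show "\<exists>K N. \<forall>n\<ge>N. \<bar>(\<Sum>j=1..n. indicator {xs<..} (x n j) * (x n j - xs) powr (-q)) / real n
          - (\<integral>s. indicator {xs<..} s * (s - xs) powr (-q) \<partial>M)\<bar> \<le> K * real n powr (-1 + q * (1/(\<kappa>+1)))"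
    using K(2) unfolding al_def by simp
qed

end

context L begin

lemma Fl: "measure M {..<u} = measure M {..u}"
proof -
  interpret finite_measure M by (rule finM)
  have "measure M ({..<u} \<union> {u}) = measure M {..<u} + measure M {u}"
    by (rule finite_measure_Union) (auto simp: setsM)
  moreover have "{..<u} \<union> {u} = {..u}" by auto
  ultimately have "measure M {..u} = measure M {..<u} + measure M {u}" by simp
  then show ?thesis using point0[of u] by simp
qed

lemma meas_ico: "measure M {u..<v} = measure M {..v} - measure M {..u}" if "u \<le> v"
proof -
  interpret finite_measure M by (rule finM)
  have "measure M ({..<v} - {..<u}) = measure M {..<v} - measure M {..<u}"
    using that by (intro finite_measure_Diff) (auto simp: setsM)
  moreover have "{..<v} - {..<u} = {u..<v}" by auto
  ultimately have "measure M {u..<v} = measure M {..<v} - measure M {..<u}" by simp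
  then show ?thesis by (simp add: Fl)
qed

lemma Lside:
  assumes q: "0 < q" "q < \<kappa> + 1"
  shows "integrable M (\<lambda>s. indicator {..<xs} s * (xs - s) powr (-q))"
    and "\<exists>K N. \<forall>n\<ge>N. \<bar>(\<Sum>j=1..n. indicator {..<xs} (x n j) * (xs - x n j) powr (-q)) / real n
          - (\<integral>s. indicator {..<xs} s * (xs - s) powr (-q) \<partial>M)\<bar> \<le> K * real n powr (-1 + q * (1/(\<kappa>+1)))"
proof -
  define B where "B = B0 + 2 * \<bar>xs\<bar> + 1"
  define al where "al = 1 / (\<kappa> + 1)"
  define r where "r = (\<lambda>s::real. 2 * xs - s)"
  define \<nu> where "\<nu> = distr M borel r"
  define y where "y = (\<lambda>n j. r (x n j))"
  define S where "S = (\<lambda>n. y n ` {1..n})"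
  have rM: "r \<in> measurable M borel" unfolding dens r_def by simp
  have rB: "r \<in> borel_measurable borel" unfolding r_def by simp
  have al: "al * (\<kappa> + 1) = 1" "0 < al" unfolding al_def using kappa by auto
  have hd: "real n powr (-al) = real n powr (-1/(\<kappa>+1))" for n unfolding al_def by simp
  have xsB: "xs < B" unfolding B_def using B0_nonneg by linarith
  have rho2: "0 < \<rho> / 2" using rho by simp
  have fin: "finite_measure \<nu>" unfolding \<nu>_def using finite_measure.finite_measure_distr[OF finM rM] .
  have sets: "sets \<nu> = sets borel" unfolding \<nu>_def by simp
  have intdistr: "integrable \<nu> f \<longleftrightarrow> integrable M (\<lambda>s. f (r s))" if "f \<in> borel_measurable borel" for f :: "real \<Rightarrow> real"
    unfolding \<nu>_def using integrable_distr_eq[OF rM that] .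
  have integr: "(\<integral>s. f s \<partial>\<nu>) = (\<integral>s. f (r s) \<partial>M)" if "f \<in> borel_measurable borel" for f :: "real \<Rightarrow> real"
    unfolding \<nu>_def using integral_distr[OF rM that] .
  have gapI: "integrable \<nu> (\<lambda>s. indicator {xs<..xs+\<delta>} s * (s - xs) powr (-q))
        \<and> (\<integral>s. indicator {xs<..xs+\<delta>} s * (s - xs) powr (-q) \<partial>\<nu>) \<le> 2 * c / (\<kappa> + 1 - q) * \<delta> powr (\<kappa> + 1 - q)"
    if d: "0 < \<delta>" "\<delta> \<le> \<rho> / 2" for \<delta>
  proof -
    define h where "h = (\<lambda>s. indicator {xs<..xs+\<delta>} (r s) * (r s - xs) powr (-q))"
    have hb: "integrable M h \<and> (\<integral>s. h s \<partial>M) \<le> 2 * c / (\<kappa> + 1 - q) * \<delta> powr (\<kappa> + 1 - q)"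
    proof (rule dens_bound)
      have bd: "\<psi> (2 * xs - t) \<le> 2 * c * (t - xs) powr \<kappa>" if "xs < t" "t < xs + \<rho>" for t
        using near[of "2 * xs - t"] that by auto
      have "(\<integral>\<^sup>+t. ennreal (h t * \<psi> t) \<partial>lborel)
          = ennreal \<bar>- 1 :: real\<bar> * (\<integral>\<^sup>+u. ennreal (h (2 * xs + (- 1) * u) * \<psi> (2 * xs + (- 1) * u)) \<partial>lborel)"
        unfolding h_def r_def using \<psi>m by (intro nn_integral_real_affine) auto
      also have "\<dots> = (\<integral>\<^sup>+u. ennreal (indicator {xs<..xs+\<delta>} u * (u - xs) powr (-q) * \<psi> (2 * xs - u)) \<partial>lborel)"
        unfolding h_def r_def by simp
      also have "\<dots> \<le> ennreal (2 * c / (\<kappa> + 1 - q) * \<delta> powr (\<kappa> + 1 - q))"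
        using d rho \<psi>m by (intro gap_nn[where \<phi>="\<lambda>u. \<psi> (2 * xs - u)", OF _ \<psi>0 c bd q(2)]) auto
      finally show "(\<integral>\<^sup>+t. ennreal (h t * \<psi> t) \<partial>lborel) \<le> ennreal (2 * c / (\<kappa> + 1 - q) * \<delta> powr (\<kappa> + 1 - q))" .
      show "h \<in> borel_measurable borel" unfolding h_def r_def by measurable
      show "0 \<le> h t" for t unfolding h_def by simp
      show "0 \<le> 2 * c / (\<kappa> + 1 - q) * \<delta> powr (\<kappa> + 1 - q)" using c q by simp
    qed
    have fm: "(\<lambda>s. indicator {xs<..xs+\<delta>} s * (s - xs) powr (-q)) \<in> borel_measurable borel" by measurable
    show ?thesis using hb intdistr[OF fm] integr[OF fm] unfolding h_def by simp
  qed
  have supp: "emeasure \<nu> {B<..} = 0"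
  proof -
    have "emeasure \<nu> {B<..} = emeasure M (r -` {B<..} \<inter> space M)"
      unfolding \<nu>_def by (rule emeasure_distr[OF rM]) simp
    also have "\<dots> \<le> emeasure M {..2 * xs - B}"
      by (intro emeasure_mono) (auto simp: r_def setsM)
    also have "\<dots> = 0"
    proof -
      have "2 * xs - B < - B0" unfolding B_def using abs_ge_self[of xs] by linarith
      from F_bot[OF this] show ?thesis using finM by (simp add: finite_measure.emeasure_eq_measure)
    qed
    finally show ?thesis by simp
  qed
  have ptsB: "y n j \<le> B" if "j \<in> {1..n}" for n j
    using bdd[OF that] unfolding B_def y_def r_def by (smt (verit))
  have ptsgap: "xs + m0 * real n powr (-al) < y n j" if "n \<ge> N0" "j \<in> {1..n}" "xs < y n j" for n j
  proof -
    have "0 \<le> m0 * real n powr (-al)" using m0 by simp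
    then show ?thesis using gap[OF that(1,2)] that(3) unfolding hd y_def r_def by auto
  qed
  have cdf: "\<bar>real (card {j\<in>{1..n}. xs + m0 * real n powr (-al) < y n j \<and> y n j \<le> t}) / real n
          - measure \<nu> {xs + m0 * real n powr (-al)<..t}\<bar> \<le> 2 * M0 / real n"
    if n: "n \<ge> N0" and t: "xs + m0 * real n powr (-al) \<le> t" "t \<le> B" "t \<notin> S n" for n t
  proof -
    define d where "d = m0 * real n powr (-al)"
    define a where "a = xs + d"
    define u where "u = 2 * xs - t"
    have d0: "0 \<le> d" unfolding d_def using m0 by simp
    have ua: "u \<le> xs - d" using t unfolding u_def d_def by simp
    have gapj: "x n j \<noteq> xs - d" if "j \<in> {1..n}" for j
      using gap[OF n that] d0 unfolding d_def hd by auto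
    have uj: "x n j \<noteq> u" if "j \<in> {1..n}" for j
      using t(3) that unfolding S_def y_def r_def u_def by force
    have "{j\<in>{1..n}. a < y n j \<and> y n j \<le> t} = {j\<in>{1..n}. x n j \<le> xs - d \<and> \<not> x n j \<le> u}"
      using gapj uj unfolding a_def y_def r_def u_def by force
    then have "real (card {j\<in>{1..n}. a < y n j \<and> y n j \<le> t}) = real (card {j\<in>{1..n}. x n j \<le> xs - d}) - real (card {j\<in>{1..n}. x n j \<le> u})"
      using cnt_diff[of "\<lambda>j. x n j \<le> u" "\<lambda>j. x n j \<le> xs - d" n] ua by auto
    then have "real (card {j\<in>{1..n}. a < y n j \<and> y n j \<le> t}) / real n = emp_cdf x n (xs - d) - emp_cdf x n u"
      unfolding emp_cdf_def by (simp add: diff_divide_distrib)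
    moreover have "measure \<nu> {a<..t} = measure M {..xs - d} - measure M {..u}"
    proof -
      have "measure \<nu> {a<..t} = measure M (r -` {a<..t} \<inter> space M)"
        unfolding \<nu>_def by (rule measure_distr[OF rM]) simp
      also have "r -` {a<..t} \<inter> space M = {u..<xs - d}"
        unfolding r_def a_def u_def spaceM by auto
      finally show ?thesis using meas_ico[OF ua] by simp
    qed
    ultimately have "\<bar>real (card {j\<in>{1..n}. a < y n j \<and> y n j \<le> t}) / real n - measure \<nu> {a<..t}\<bar>
        \<le> \<bar>emp_cdf x n (xs - d) - measure M {..xs - d}\<bar> + \<bar>emp_cdf x n u - measure M {..u}\<bar>" by simp
    also have "\<dots> \<le> M0 / real n + M0 / real n" by (intro add_mono cdfb n)
    finally show ?thesis unfolding a_def d_def by simp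
  qed
  have fS: "finite (S n)" for n unfolding S_def by simp
  have BS: "B \<notin> S n" for n
  proof
    assume "B \<in> S n"
    then obtain j where "j \<in> {1..n}" "B = y n j" unfolding S_def by auto
    then show False using bdd[of j n] unfolding B_def y_def r_def by (smt (verit))
  qed
  note K = Kside[OF fin sets q(1) al m0 xsB rho2 gapI supp ptsB ptsgap cdf fS BS]
  have fm: "(\<lambda>s. indicator {xs<..} s * (s - xs) powr (-q)) \<in> borel_measurable borel" by measurable
  have eqf: "(\<lambda>s. indicator {xs<..} (r s) * (r s - xs) powr (-q)) = (\<lambda>s. indicator {..<xs} s * (xs - s) powr (-q))"
    unfolding r_def by (auto simp: fun_eq_iff indicator_def)
  show "integrable M (\<lambda>s. indicator {..<xs} s * (xs - s) powr (-q))"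
    using K(1) intdistr[OF fm] unfolding eqf by simp
  have eqI: "(\<integral>s. indicator {xs<..} s * (s - xs) powr (-q) \<partial>\<nu>) = (\<integral>s. indicator {..<xs} s * (xs - s) powr (-q) \<partial>M)"
    using integr[OF fm] unfolding eqf by simp
  have eqS: "(\<Sum>j=1..n. indicator {xs<..} (y n j) * (y n j - xs) powr (-q)) = (\<Sum>j=1..n. indicator {..<xs} (x n j) * (xs - x n j) powr (-q))" for n
    unfolding y_def using eqf by (simp add: fun_eq_iff)
  show "\<exists>K N. \<forall>n\<ge>N. \<bar>(\<Sum>j=1..n. indicator {..<xs} (x n j) * (xs - x n j) powr (-q)) / real n
          - (\<integral>s. indicator {..<xs} s * (xs - s) powr (-q) \<partial>M)\<bar> \<le> K * real n powr (-1 + q * (1/(\<kappa>+1)))"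
    using K(2) unfolding eqI eqS al_def by simp
qed

end

lemma taylor_term:
  fixes u v :: complex
  assumes "v \<noteq> 0" "u + v \<noteq> 0"
  shows "1 / (u + v) = 1 / v - u / v^2 + u^2 / v^3 - u^3 / (v^3 * (u + v))"
proof -
  have t: "1 / w = 1 / v - (w - v) / v^2 + (w - v)^2 / v^3 - (w - v)^3 / (v^3 * w)" if "v \<noteq> 0" "w \<noteq> 0" for w v :: complex
    using that by (simp add: field_simps eval_nat_numeral)
  show ?thesis using t[OF assms(1,2)] by simp
qed

lemma rem_bound:
  fixes u v :: complex
  assumes "cmod u \<le> cmod v / 2" "v \<noteq> 0"
  shows "cmod (u^3 / (v^3 * (u + v))) \<le> 2 * cmod u ^ 3 / cmod v ^ 4"
proof -
  have uv: "cmod v / 2 \<le> cmod (u + v)"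
    using norm_triangle_ineq2[of v "-u"] assms(1) by (simp add: add.commute norm_minus_commute) 
  have pos: "0 < cmod v" using assms by simp
  have "cmod (u^3 / (v^3 * (u + v))) = cmod u ^ 3 / (cmod v ^ 3 * cmod (u + v))"
    by (simp add: norm_divide norm_mult norm_power)
  also have "\<dots> \<le> cmod u ^ 3 / (cmod v ^ 3 * (cmod v / 2))"
    using uv pos by (intro divide_left_mono mult_left_mono mult_pos_pos) auto
  also have "\<dots> = 2 * cmod u ^ 3 / cmod v ^ 4" using pos by (simp add: field_simps eval_nat_numeral)
  finally show ?thesis .
qed

lemma d3_bound:
  fixes u v :: complex
  assumes "cmod u \<le> cmod v / 2" "v \<noteq> 0"
  shows "cmod (1 / (u + v)^3 - 1 / v^3) \<le> 40 * cmod u / cmod v ^ 4"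
proof -
  have uv: "cmod v / 2 \<le> cmod (u + v)"
    using norm_triangle_ineq2[of v "-u"] assms(1) by (simp add: add.commute norm_minus_commute)
  have pos: "0 < cmod v" using assms by simp
  have uv0: "u + v \<noteq> 0" using uv pos by auto
  have t: "1 / w^3 - 1 / v^3 = - ((w-v) * (3 * v^2 + 3 * (w-v) * v + (w-v)^2)) / (w^3 * v^3)"
    if "v \<noteq> 0" "w \<noteq> 0" for w v :: complex
    using that apply (simp add: divide_simps) by algebra
  have eq: "1 / (u + v)^3 - 1 / v^3 = - (u * (3 * v^2 + 3 * u * v + u^2)) / ((u + v)^3 * v^3)"
    using t[OF assms(2) uv0] by simp
  have num: "cmod (u * (3 * v^2 + 3 * u * v + u^2)) \<le> cmod u * (5 * cmod v ^ 2)"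
  proof -
    have "cmod (3 * v^2 + 3 * u * v + u^2) \<le> 3 * cmod v ^ 2 + 3 * cmod u * cmod v + cmod u ^ 2"
      by (rule order_trans[OF norm_triangle_ineq] order_trans[OF add_mono[OF norm_triangle_ineq order_refl]])+
         (simp_all add: norm_mult norm_power)
    also have "\<dots> \<le> 5 * cmod v ^ 2"
    proof -
      have "cmod u * cmod v \<le> cmod v / 2 * cmod v" using assms(1) by (intro mult_right_mono) auto
      then have h1: "3 * cmod u * cmod v \<le> 3 / 2 * cmod v ^ 2" by (simp add: power2_eq_square)
      have "cmod u ^ 2 \<le> (cmod v / 2) ^ 2" using assms(1) by (intro power_mono) auto
      then have h2: "cmod u ^ 2 \<le> cmod v ^ 2 / 4" by (simp add: power_divide)
      have "3 * cmod v ^ 2 + 3 * cmod u * cmod v + cmod u ^ 2 \<le> 3 * cmod v ^ 2 + 3 / 2 * cmod v ^ 2 + cmod v ^ 2 / 4"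
        by (intro add_mono order_refl h1 h2)
      also have "\<dots> \<le> 5 * cmod v ^ 2" by simp
      finally show "3 * cmod v ^ 2 + 3 * cmod u * cmod v + cmod u ^ 2 \<le> 5 * cmod v ^ 2" .
    qed
    finally show ?thesis by (simp add: norm_mult mult_left_mono)
  qed
  have den: "cmod v ^ 3 * cmod v ^ 3 / 8 \<le> cmod ((u + v)^3 * v^3)"
  proof -
    have "(cmod v / 2) ^ 3 \<le> cmod (u + v) ^ 3" using uv pos by (intro power_mono) auto
    then have "cmod v ^ 3 / 8 \<le> cmod (u + v) ^ 3" by (simp add: power_divide)
    then have "cmod v ^ 3 * (cmod v ^ 3 / 8) \<le> cmod v ^ 3 * cmod (u + v) ^ 3"
      by (intro mult_left_mono) auto
    then show ?thesis by (simp add: norm_mult norm_power mult.commute)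
  qed
  have "cmod (1 / (u + v)^3 - 1 / v^3) = cmod (u * (3 * v^2 + 3 * u * v + u^2)) / cmod ((u + v)^3 * v^3)"
    unfolding eq by (simp add: norm_divide)
  also have "\<dots> \<le> (cmod u * (5 * cmod v ^ 2)) / (cmod v ^ 3 * cmod v ^ 3 / 8)"
    using num den pos by (intro frac_le) auto
  also have "\<dots> = 40 * cmod u / cmod v ^ 4" using pos by (simp add: field_simps eval_nat_numeral)
  finally show ?thesis .
qed

lemma inv4_powr:
  fixes v \<delta> p :: real
  assumes "0 < \<delta>" "\<delta> \<le> \<bar>v\<bar>" "p \<le> 1"
  shows "1 / \<bar>v\<bar> ^ 4 \<le> \<delta> powr (p - 1) * \<bar>v\<bar> powr (- (3 + p))"
proof -
  have v: "0 < \<bar>v\<bar>" using assms by simp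
  have "1 / \<bar>v\<bar> ^ 4 = \<bar>v\<bar> powr (p - 1) * \<bar>v\<bar> powr (- (3 + p))"
    using v by (simp add: powr_add[symmetric] powr_minus powr_realpow divide_inverse)
  also have "\<dots> \<le> \<delta> powr (p - 1) * \<bar>v\<bar> powr (- (3 + p))"
    using assms by (intro mult_right_mono powr_mono2') auto
  finally show ?thesis .
qed

lemma inv_deriv1:
  fixes c w :: complex
  assumes "w \<noteq> c"
  shows "((\<lambda>w. 1 / (w - c)) has_field_derivative (- 1 / (w - c)^2)) (at w)"
  using assms by (auto intro!: derivative_eq_intros simp: power2_eq_square field_simps)

lemma inv_deriv2:
  fixes c w :: complex
  assumes "w \<noteq> c"
  shows "((\<lambda>w. - 1 / (w - c)^2) has_field_derivative (2 / (w - c)^3)) (at w)"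
proof -
  have d: "w - c \<noteq> 0" using assms by simp
  have A: "((\<lambda>w. - ((1 / (w - c))^2)) has_field_derivative - (of_nat 2 * ((- 1 / (w - c)^2) * (1 / (w - c))^(2 - Suc 0)))) (at w)"
    by (rule DERIV_minus[OF DERIV_power[OF inv_deriv1[OF assms]]])
  have f: "(\<lambda>w. - ((1 / (w - c))^2)) = (\<lambda>w. - 1 / (w - c)^2)" by (simp add: power_one_over fun_eq_iff)
  have h: "- (of_nat 2 * ((- 1 / h^2) * (1 / h)^(2 - Suc 0))) = 2 / h^3" if "h \<noteq> 0" for h :: complex
    using that by (simp add: field_simps eval_nat_numeral)
  show ?thesis using A unfolding f h[OF d] .
qed

lemma deriv2_emp:
  fixes x :: "nat \<Rightarrow> nat \<Rightarrow> real" and z :: complex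
  assumes pts: "\<And>j. j \<in> {1..n} \<Longrightarrow> d < \<bar>x n j - xs\<bar>" and z: "cmod (z - complex_of_real xs) < d"
  shows "deriv (deriv (emp_stieltjes x n)) z = 2 * (\<Sum>j=1..n. 1 / (z - complex_of_real (x n j))^3) / of_nat n"
proof -
  define U where "U = ball (complex_of_real xs) d"
  have zU: "z \<in> U" unfolding U_def using z by (simp add: dist_norm norm_minus_commute)
  have ne: "w \<noteq> complex_of_real (x n j)" if "w \<in> U" "j \<in> {1..n}" for w j
  proof
    assume "w = complex_of_real (x n j)"
    then have "cmod (complex_of_real (x n j) - complex_of_real xs) < d"
      using that(1) unfolding U_def by (simp add: dist_norm norm_minus_commute)
    then have "\<bar>x n j - xs\<bar> < d" by (metis norm_of_real of_real_diff)
    then show False using pts[OF that(2)] by simp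
  qed
  define D1 where "D1 = (\<lambda>w. (\<Sum>j=1..n. - 1 / (w - complex_of_real (x n j))^2) / of_nat n)"
  have d1: "(emp_stieltjes x n has_field_derivative D1 w) (at w)" if "w \<in> U" for w
  proof -
    have "((\<lambda>w. (\<Sum>j=1..n. 1 / (w - complex_of_real (x n j))) / of_nat n) has_field_derivative D1 w) (at w)"
      unfolding D1_def using ne[OF that] by (intro DERIV_cdivide DERIV_sum inv_deriv1) auto
    then show ?thesis unfolding emp_stieltjes_def[abs_def] .
  qed
  have ev: "eventually (\<lambda>w. deriv (emp_stieltjes x n) w = D1 w) (nhds z)"
  proof -
    have "open U" unfolding U_def by simp
    then have "eventually (\<lambda>w. w \<in> U) (nhds z)" using zU by (rule eventually_nhds_in_open)
    then show ?thesis by eventually_elim (rule DERIV_imp_deriv[OF d1])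
  qed
  have "deriv (deriv (emp_stieltjes x n)) z = deriv D1 z" by (rule deriv_cong_ev[OF ev refl])
  also have "\<dots> = (\<Sum>j=1..n. 2 / (z - complex_of_real (x n j))^3) / of_nat n"
    unfolding D1_def using ne[OF zU] by (intro DERIV_imp_deriv DERIV_cdivide DERIV_sum inv_deriv2) auto
  also have "\<dots> = 2 * (\<Sum>j=1..n. 1 / (z - complex_of_real (x n j))^3) / of_nat n"
    by (simp add: sum_distrib_left)
  finally show ?thesis .
qed

lemma inv_pow_split:
  fixes xs s :: real and k :: nat
  assumes k: "k \<ge> 1"
  shows "1 / (xs - s)^k = indicator {..<xs} s * (xs - s) powr (- real k)
           + (-1)^k * (indicator {xs<..} s * (s - xs) powr (- real k))"
proof (cases "s < xs")
  case True
  then show ?thesis by (simp add: powr_minus powr_realpow divide_inverse)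
next
  case False
  show ?thesis
  proof (cases "s = xs")
    case True then show ?thesis using k by simp
  next
    case False2: False
    then have sx: "xs < s" using False by simp
    have "(xs - s)^k = (-1)^k * (s - xs)^k" by (metis minus_diff_eq power_minus)
    then have "1 / (xs - s)^k = (1 / (-1)^k) * (1 / (s - xs)^k)" by simp
    also have "1 / (-1::real)^k = (-1)^k" by (simp add: power_one_over[symmetric])
    also have "1 / (s - xs)^k = (s - xs) powr (- real k)" using sx by (simp add: powr_minus powr_realpow divide_inverse)
    finally show ?thesis using sx by simp
  qed
qed

lemma abs_powr_split:
  fixes xs s q :: real
  shows "\<bar>xs - s\<bar> powr (- q) = indicator {..<xs} s * (xs - s) powr (- q) + indicator {xs<..} s * (s - xs) powr (- q)"
  by (cases "s < xs"; cases "s = xs") (auto simp: indicator_def abs_if)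

context L begin

lemma Ek:
  assumes k: "1 \<le> k" "k \<le> (3::nat)"
  shows "integrable M (\<lambda>s. 1 / (xs - s)^k)"
    and "\<exists>K N. \<forall>n\<ge>N. \<bar>(\<Sum>j=1..n. 1 / (xs - x n j)^k) / real n - (\<integral>s. 1 / (xs - s)^k \<partial>M)\<bar>
          \<le> K * real n powr (-1 + real k * (1/(\<kappa>+1)))"
proof -
  have q: "0 < real k" "real k < \<kappa> + 1" using k kappa by auto
  note R = Rside[OF q] and Lf = Lside[OF q]
  define fL where "fL = (\<lambda>s. indicator {..<xs} s * (xs - s) powr (- real k))"
  define fR where "fR = (\<lambda>s. indicator {xs<..} s * (s - xs) powr (- real k))"
  have split: "(\<lambda>s. 1 / (xs - s)^k) = (\<lambda>s. fL s + (-1)^k * fR s)"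
    unfolding fL_def fR_def using inv_pow_split[OF k(1)] by (simp add: fun_eq_iff)
  have iL: "integrable M fL" using Lf(1) unfolding fL_def .
  have iR: "integrable M fR" using R(1) unfolding fR_def .
  show "integrable M (\<lambda>s. 1 / (xs - s)^k)" unfolding split using iL iR by simp
  have I: "(\<integral>s. 1 / (xs - s)^k \<partial>M) = (\<integral>s. fL s \<partial>M) + (-1)^k * (\<integral>s. fR s \<partial>M)"
    unfolding split using iL iR by simp
  obtain KL NL where KL: "\<And>n. n \<ge> NL \<Longrightarrow> \<bar>(\<Sum>j=1..n. fL (x n j)) / real n - (\<integral>s. fL s \<partial>M)\<bar> \<le> KL * real n powr (-1 + real k * (1/(\<kappa>+1)))"
    using Lf(2) unfolding fL_def by blast
  obtain KR NR where KR: "\<And>n. n \<ge> NR \<Longrightarrow> \<bar>(\<Sum>j=1..n. fR (x n j)) / real n - (\<integral>s. fR s \<partial>M)\<bar> \<le> KR * real n powr (-1 + real k * (1/(\<kappa>+1)))"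
    using R(2) unfolding fR_def by blast
  have "\<bar>(\<Sum>j=1..n. 1 / (xs - x n j)^k) / real n - (\<integral>s. 1 / (xs - s)^k \<partial>M)\<bar>
          \<le> (KL + KR) * real n powr (-1 + real k * (1/(\<kappa>+1)))" if n: "n \<ge> max NL NR" for n
  proof -
    have S: "(\<Sum>j=1..n. 1 / (xs - x n j)^k) / real n = (\<Sum>j=1..n. fL (x n j)) / real n + (-1)^k * ((\<Sum>j=1..n. fR (x n j)) / real n)"
      using split by (simp add: fun_eq_iff sum.distrib sum_distrib_left add_divide_distrib)
    have e: "(\<Sum>j=1..n. 1 / (xs - x n j)^k) / real n - (\<integral>s. 1 / (xs - s)^k \<partial>M)
        = ((\<Sum>j=1..n. fL (x n j)) / real n - (\<integral>s. fL s \<partial>M)) + (-1)^k * ((\<Sum>j=1..n. fR (x n j)) / real n - (\<integral>s. fR s \<partial>M))"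
      unfolding S I by (simp add: algebra_simps)
    have "\<bar>(-1::real)^k * ((\<Sum>j=1..n. fR (x n j)) / real n - (\<integral>s. fR s \<partial>M))\<bar> = \<bar>(\<Sum>j=1..n. fR (x n j)) / real n - (\<integral>s. fR s \<partial>M)\<bar>"
      by (simp add: abs_mult)
    then show ?thesis unfolding e using KL[of n] KR[of n] n
      by (smt (verit, best) distrib_right max.bounded_iff)
  qed
  then show "\<exists>K N. \<forall>n\<ge>N. \<bar>(\<Sum>j=1..n. 1 / (xs - x n j)^k) / real n - (\<integral>s. 1 / (xs - s)^k \<partial>M)\<bar>
          \<le> K * real n powr (-1 + real k * (1/(\<kappa>+1)))" by blast
qed

lemma A4:
  assumes q: "0 < q" "q < \<kappa> + 1"
  shows "\<exists>A K N. \<forall>n\<ge>N. (\<Sum>j=1..n. \<bar>xs - x n j\<bar> powr (- q)) / real n \<le> A + K * real n powr (-1 + q * (1/(\<kappa>+1)))"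
proof -
  note R = Rside[OF q] and Lf = Lside[OF q]
  define fL where "fL = (\<lambda>s. indicator {..<xs} s * (xs - s) powr (- q))"
  define fR where "fR = (\<lambda>s. indicator {xs<..} s * (s - xs) powr (- q))"
  obtain KL NL where KL: "\<And>n. n \<ge> NL \<Longrightarrow> \<bar>(\<Sum>j=1..n. fL (x n j)) / real n - (\<integral>s. fL s \<partial>M)\<bar> \<le> KL * real n powr (-1 + q * (1/(\<kappa>+1)))"
    using Lf(2) unfolding fL_def by blast
  obtain KR NR where KR: "\<And>n. n \<ge> NR \<Longrightarrow> \<bar>(\<Sum>j=1..n. fR (x n j)) / real n - (\<integral>s. fR s \<partial>M)\<bar> \<le> KR * real n powr (-1 + q * (1/(\<kappa>+1)))"
    using R(2) unfolding fR_def by blast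
  have "(\<Sum>j=1..n. \<bar>xs - x n j\<bar> powr (- q)) / real n \<le> ((\<integral>s. fL s \<partial>M) + (\<integral>s. fR s \<partial>M)) + (KL + KR) * real n powr (-1 + q * (1/(\<kappa>+1)))"
    if n: "n \<ge> max NL NR" for n
  proof -
    have S: "(\<Sum>j=1..n. \<bar>xs - x n j\<bar> powr (- q)) / real n = (\<Sum>j=1..n. fL (x n j)) / real n + (\<Sum>j=1..n. fR (x n j)) / real n"
      unfolding fL_def fR_def abs_powr_split by (simp add: sum.distrib add_divide_distrib)
    show ?thesis unfolding S using KL[of n] KR[of n] n by (simp add: distrib_right)
  qed
  then show ?thesis by blast
qed

end

lemma sum_taylor:
  fixes u :: complex and v :: "nat \<Rightarrow> complex"
  assumes "\<And>j. j \<in> J \<Longrightarrow> v j \<noteq> 0" "\<And>j. j \<in> J \<Longrightarrow> u + v j \<noteq> 0"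
  shows "(\<Sum>j\<in>J. 1 / (u + v j)) = (\<Sum>j\<in>J. 1 / v j) - u * (\<Sum>j\<in>J. 1 / (v j)^2)
           + u^2 * (\<Sum>j\<in>J. 1 / (v j)^3) - (\<Sum>j\<in>J. u^3 / ((v j)^3 * (u + v j)))"
proof -
  have "(\<Sum>j\<in>J. 1 / (u + v j)) = (\<Sum>j\<in>J. 1 / v j - u / (v j)^2 + u^2 / (v j)^3 - u^3 / ((v j)^3 * (u + v j)))"
    using taylor_term assms by (intro sum.cong) auto
  also have "\<dots> = (\<Sum>j\<in>J. 1 / v j) - u * (\<Sum>j\<in>J. 1 / (v j)^2)
           + u^2 * (\<Sum>j\<in>J. 1 / (v j)^3) - (\<Sum>j\<in>J. u^3 / ((v j)^3 * (u + v j)))"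
    by (simp add: sum.distrib sum_subtractf sum_distrib_left)
  finally show ?thesis .
qed

lemma single_bd:
  fixes X c n a T :: real
  assumes "X \<le> c * n powr a" "a \<le> T" "0 \<le> c" "1 \<le> n"
  shows "X \<le> c * n powr T"
  using assms(1) order_trans mult_left_mono[OF powr_mono[OF assms(2) assms(4)] assms(3)] by blast

lemma prod_bd:
  fixes X Y c1 c2 n a b T :: real
  assumes "0 \<le> X" "X \<le> c1 * n powr a" "0 \<le> Y" "Y \<le> c2 * n powr b" "a + b \<le> T" "0 \<le> c1" "0 \<le> c2" "1 \<le> n"
  shows "X * Y \<le> (c1 * c2) * n powr T"
proof -
  have "X * Y \<le> (c1 * n powr a) * (c2 * n powr b)"
    using assms by (intro mult_mono) auto
  also have "\<dots> = (c1 * c2) * n powr (a + b)" by (simp add: powr_add)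
  finally show ?thesis using single_bd[OF _ assms(5)] assms by (simp add: mult_nonneg_nonneg)
qed

context L begin

lemma final:
  fixes \<epsilon> C :: real
  assumes eps_pos: "0 < \<epsilon>" and eps_bd: "\<epsilon> < min ((\<kappa> - 2) / (6 * (\<kappa> + 1))) (1/15)" and C: "C > 0"
  shows "(\<exists>K N. \<forall>n\<ge>N. \<forall>z. cmod (z - complex_of_real xs) \<le> C * real n powr (-1/3 + \<epsilon>) \<longrightarrow>
        cmod (emp_stieltjes x n z
              - (complex_of_real (Gcoef M xs 0)
                 + complex_of_real (Gcoef M xs 1) * (z - complex_of_real xs)
                 + complex_of_real (Gcoef M xs 2) / 2 * (z - complex_of_real xs) ^ 2))
          \<le> K * real n powr (-2/3 - 2 * \<epsilon>)) \<and>
     (\<exists>K N. \<forall>n\<ge>N. \<forall>z. cmod (z - complex_of_real xs) \<le> C * real n powr (-1/3 + \<epsilon>) \<longrightarrow>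
        cmod (deriv (deriv (emp_stieltjes x n)) z - complex_of_real (Gcoef M xs 2))
          \<le> K * real n powr (- \<epsilon>))"
proof -
  define al where "al = 1 / (\<kappa> + 1)"
  have al0: "0 < al" and al3: "al < 1/3" and alk: "al * (\<kappa> + 1) = 1"
    unfolding al_def using kappa by (auto simp: field_simps)
  have he1: "\<epsilon> < (1 - 3 * al) / 6"
  proof -
    have eq: "(\<kappa> - 2) / (6 * (\<kappa> + 1)) = (1 - 3 * al) / 6" unfolding al_def using kappa by (simp add: field_simps)
    have h: "\<epsilon> < (\<kappa> - 2) / (6 * (\<kappa> + 1))" using eps_bd min.strict_boundedE by blast
    show ?thesis using h unfolding eq .
  qed
  have he2: "\<epsilon> < 1/15" using eps_bd min.strict_boundedE by blast
  define p where "p = max 0 (1 - (1/3 - 5 * \<epsilon>) / al)"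
  define q4 where "q4 = 3 + p"
  have hp0: "0 \<le> p" unfolding p_def by simp
  have hp1: "p \<le> 1" unfolding p_def using he2 al0 by (simp add: divide_nonneg_pos)
  have hp2: "al * (1 - p) \<le> 1/3 - 5 * \<epsilon>"
  proof (cases "0 \<le> 1 - (1/3 - 5 * \<epsilon>) / al")
    case True
    then have "p = 1 - (1/3 - 5 * \<epsilon>) / al" unfolding p_def by simp
    then show ?thesis using al0 by (simp add: field_simps)
  next
    case False
    then have "p = 0" unfolding p_def by simp
    moreover have "al < 1/3 - 5 * \<epsilon>" using False al0 by (simp add: field_simps)
    ultimately show ?thesis by simp
  qed
  have hq4: "0 < q4" "q4 < \<kappa> + 1"
  proof -
    show "0 < q4" unfolding q4_def using hp0 by simp
    have kk: "\<kappa> - 2 = 1 / al - 3" unfolding al_def using kappa by (simp add: field_simps)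
    have "p < \<kappa> - 2"
    proof (cases "0 \<le> 1 - (1/3 - 5 * \<epsilon>) / al")
      case True
      then have pe: "p = 1 - (1/3 - 5 * \<epsilon>) / al" unfolding p_def by simp
      have "al - (1/3 - 5 * \<epsilon>) < 1 - 3 * al" using he1 al3 by argo
      then have "(al - (1/3 - 5 * \<epsilon>)) / al < (1 - 3 * al) / al" using al0 by (simp add: divide_strict_right_mono)
      then show ?thesis unfolding pe kk using al0 by (simp add: diff_divide_distrib)
    next
      case False
      then show ?thesis unfolding p_def using kappa by simp
    qed
    then show "q4 < \<kappa> + 1" unfolding q4_def by simp
  qed
  have q4al: "-1 + q4 * al \<le> 0"
  proof -
    have "q4 * al < (\<kappa> + 1) * al" using hq4 al0 by (simp add: mult_strict_right_mono)
    then show ?thesis using alk by (simp add: mult.commute)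
  qed
  have alr: "real k * (1 / (\<kappa> + 1)) = real k * al" for k :: nat unfolding al_def ..
  obtain K1 N1 where K1: "\<And>n. n \<ge> N1 \<Longrightarrow> \<bar>(\<Sum>j=1..n. 1 / (xs - x n j)^1) / real n - (\<integral>s. 1 / (xs - s)^1 \<partial>M)\<bar> \<le> K1 * real n powr (-1 + real 1 * al)"
    using Ek(2)[of 1] unfolding alr by auto
  obtain K2 N2 where K2: "\<And>n. n \<ge> N2 \<Longrightarrow> \<bar>(\<Sum>j=1..n. 1 / (xs - x n j)^2) / real n - (\<integral>s. 1 / (xs - s)^2 \<partial>M)\<bar> \<le> K2 * real n powr (-1 + real 2 * al)"
    using Ek(2)[of 2] unfolding alr by auto
  obtain K3 N3 where K3: "\<And>n. n \<ge> N3 \<Longrightarrow> \<bar>(\<Sum>j=1..n. 1 / (xs - x n j)^3) / real n - (\<integral>s. 1 / (xs - s)^3 \<partial>M)\<bar> \<le> K3 * real n powr (-1 + real 3 * al)"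
    using Ek(2)[of 3] unfolding alr by auto
  obtain A K4 N4 where K4: "\<And>n. n \<ge> N4 \<Longrightarrow> (\<Sum>j=1..n. \<bar>xs - x n j\<bar> powr (- q4)) / real n \<le> A + K4 * real n powr (-1 + q4 * al)"
    using A4[OF hq4] unfolding al_def by blast
  obtain Nr where Nr: "\<And>n. n \<ge> Nr \<Longrightarrow> C * real n powr (-1/3 + \<epsilon> + al) \<le> m0 / 2"
    using ev_powr_small[of "-1/3 + \<epsilon> + al" "m0 / 2" C] he1 al3 m0 by auto
  define I1 where "I1 = (\<integral>s. 1 / (xs - s)^1 \<partial>M)"
  define I2 where "I2 = (\<integral>s. 1 / (xs - s)^2 \<partial>M)"
  define I3 where "I3 = (\<integral>s. 1 / (xs - s)^3 \<partial>M)"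
  have G0: "Gcoef M xs 0 = I1" unfolding Gcoef_def I1_def by simp
  have G1: "Gcoef M xs 1 = - I2" unfolding Gcoef_def I2_def by (simp add: numeral_2_eq_2)
  have G2: "Gcoef M xs 2 = 2 * I3" unfolding Gcoef_def I3_def by (simp add: numeral_3_eq_3)
  define N where "N = max (max (max N0 N1) (max N2 N3)) (max (max N4 Nr) 1)"
  define A' where "A' = \<bar>A\<bar> + \<bar>K4\<bar>"
  have common: "1 \<le> real n \<and> (\<forall>j\<in>{1..n}. m0 * real n powr (- al) < \<bar>xs - x n j\<bar>)
      \<and> C * real n powr (-1/3 + \<epsilon>) \<le> m0 * real n powr (- al) / 2
      \<and> (\<Sum>j=1..n. \<bar>xs - x n j\<bar> powr (- q4)) / real n \<le> A'" if n: "n \<ge> N" for n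
  proof (intro conjI ballI)
    show n1: "1 \<le> real n" using n unfolding N_def by auto
    fix j assume j: "j \<in> {1..n}"
    have "n \<ge> N0" using n unfolding N_def by auto
    from gap[OF this j] have "x n j \<notin> {xs - m0 * real n powr (- al) .. xs + m0 * real n powr (- al)}"
      unfolding al_def by simp
    then show "m0 * real n powr (- al) < \<bar>xs - x n j\<bar>" by auto
  next
    have n1: "1 \<le> real n" using n unfolding N_def by auto
    have "C * real n powr (-1/3 + \<epsilon>) = C * real n powr (-1/3 + \<epsilon> + al) * real n powr (- al)"
      by (simp add: powr_add[symmetric])
    also have "\<dots> \<le> m0 / 2 * real n powr (- al)"
      using Nr[of n] n unfolding N_def by (intro mult_right_mono) auto
    finally show "C * real n powr (-1/3 + \<epsilon>) \<le> m0 * real n powr (- al) / 2" by simp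
  next
    have n1: "1 \<le> real n" using n unfolding N_def by auto
    have "(\<Sum>j=1..n. \<bar>xs - x n j\<bar> powr (- q4)) / real n \<le> A + K4 * real n powr (-1 + q4 * al)"
      using K4[of n] n unfolding N_def by auto
    also have "\<dots> \<le> \<bar>A\<bar> + \<bar>K4\<bar> * 1"
    proof -
      have "real n powr (-1 + q4 * al) \<le> 1" using powr_mono[OF q4al n1] n1 by simp
      then have "\<bar>K4\<bar> * real n powr (-1 + q4 * al) \<le> \<bar>K4\<bar> * 1" by (intro mult_left_mono) auto
      moreover have "K4 * real n powr (-1 + q4 * al) \<le> \<bar>K4\<bar> * real n powr (-1 + q4 * al)"
        by (intro mult_right_mono) auto
      ultimately have "K4 * real n powr (-1 + q4 * al) \<le> \<bar>K4\<bar> * 1" by linarith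
      then show ?thesis by linarith
    qed
    finally show "(\<Sum>j=1..n. \<bar>xs - x n j\<bar> powr (- q4)) / real n \<le> A'" unfolding A'_def by simp
  qed
  have inv4: "(\<Sum>j=1..n. 1 / \<bar>xs - x n j\<bar> ^ 4) / real n \<le> (m0 * real n powr (- al)) powr (p - 1) * A'"
    if n: "n \<ge> N" for n
  proof -
    define \<delta> where "\<delta> = m0 * real n powr (- al)"
    have c: "1 \<le> real n" "\<forall>j\<in>{1..n}. \<delta> < \<bar>xs - x n j\<bar>" "(\<Sum>j=1..n. \<bar>xs - x n j\<bar> powr (- q4)) / real n \<le> A'"
      using common[OF n] unfolding \<delta>_def by auto
    have d0: "0 < \<delta>" unfolding \<delta>_def using m0 c(1) by simp
    have "(\<Sum>j=1..n. 1 / \<bar>xs - x n j\<bar> ^ 4) \<le> (\<Sum>j=1..n. \<delta> powr (p - 1) * \<bar>xs - x n j\<bar> powr (- (3 + p)))"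
      by (intro sum_mono inv4_powr[OF d0 _ hp1]) (use c(2) in force)
    also have "\<dots> = \<delta> powr (p - 1) * (\<Sum>j=1..n. \<bar>xs - x n j\<bar> powr (- q4))"
      unfolding q4_def by (simp add: sum_distrib_left)
    finally have "(\<Sum>j=1..n. 1 / \<bar>xs - x n j\<bar> ^ 4) / real n \<le> \<delta> powr (p - 1) * ((\<Sum>j=1..n. \<bar>xs - x n j\<bar> powr (- q4)) / real n)"
      using c(1) by (simp add: divide_right_mono)
    also have "\<dots> \<le> \<delta> powr (p - 1) * A'" using c(3) by (intro mult_left_mono) auto
    finally show ?thesis unfolding \<delta>_def .
  qed
  have dpow: "(m0 * real n powr (- al)) powr (p - 1) = m0 powr (p - 1) * real n powr (al * (1 - p))" if "1 \<le> real n" for n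
    using that m0 by (simp add: powr_mult powr_powr algebra_simps)
  have x1: "-1 + real 1 * al \<le> -2/3 - 2 * \<epsilon>" using he1 al3 by (simp; argo)
  have x2: "(-1/3 + \<epsilon>) + (-1 + real 2 * al) \<le> -2/3 - 2 * \<epsilon>" using he1 al3 by (simp; argo)
  have x3: "((-1/3 + \<epsilon>) + (-1/3 + \<epsilon>)) + (-1 + real 3 * al) \<le> -2/3 - 2 * \<epsilon>" using he1 al3 by (simp; argo)
  have x4: "(((-1/3 + \<epsilon>) + (-1/3 + \<epsilon>)) + (-1/3 + \<epsilon>)) + al * (1 - p) \<le> -2/3 - 2 * \<epsilon>" using hp2 by argo
  have y1: "-1 + real 3 * al \<le> - \<epsilon>" using he1 al3 by (simp; argo)
  have y2: "(-1/3 + \<epsilon>) + al * (1 - p) \<le> - \<epsilon>" using hp2 eps_pos by argo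
  have stp: "1 \<le> real n \<and> (\<forall>j\<in>{1..n}. complex_of_real (xs - x n j) \<noteq> 0
        \<and> cmod (z - complex_of_real xs) \<le> cmod (complex_of_real (xs - x n j)) / 2
        \<and> (z - complex_of_real xs) + complex_of_real (xs - x n j) \<noteq> 0
        \<and> m0 * real n powr (- al) < \<bar>x n j - xs\<bar>)
        \<and> cmod (z - complex_of_real xs) < m0 * real n powr (- al)"
    if n: "n \<ge> N" and z: "cmod (z - complex_of_real xs) \<le> C * real n powr (-1/3 + \<epsilon>)" for n z
  proof -
    note c = common[OF n]
    have d0: "0 < m0 * real n powr (- al)" using m0 c by simp
    have zr: "cmod (z - complex_of_real xs) \<le> m0 * real n powr (- al) / 2" using z c by argo
    have jj: "complex_of_real (xs - x n j) \<noteq> 0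
        \<and> cmod (z - complex_of_real xs) \<le> cmod (complex_of_real (xs - x n j)) / 2
        \<and> (z - complex_of_real xs) + complex_of_real (xs - x n j) \<noteq> 0
        \<and> m0 * real n powr (- al) < \<bar>x n j - xs\<bar>" if j: "j \<in> {1..n}" for j
    proof -
      have g: "m0 * real n powr (- al) < \<bar>xs - x n j\<bar>" using c j by auto
      have nv: "cmod (complex_of_real (xs - x n j)) = \<bar>xs - x n j\<bar>" by (rule norm_of_real)
      have a: "cmod (z - complex_of_real xs) \<le> cmod (complex_of_real (xs - x n j)) / 2"
        using zr g unfolding nv by argo
      moreover have "complex_of_real (xs - x n j) \<noteq> 0" using g d0 by auto
      moreover have "(z - complex_of_real xs) + complex_of_real (xs - x n j) \<noteq> 0"
      proof
        assume h: "(z - complex_of_real xs) + complex_of_real (xs - x n j) = 0"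
        then have "cmod (z - complex_of_real xs) = cmod (complex_of_real (xs - x n j))"
          by (metis add_eq_0_iff norm_minus_cancel)
        then show False using a g d0 unfolding nv by argo
      qed
      moreover have "m0 * real n powr (- al) < \<bar>x n j - xs\<bar>" using g by (simp add: abs_minus_commute)
      ultimately show ?thesis by blast
    qed
    show ?thesis using c jj zr d0 by auto
  qed
  have part1: "\<exists>K N. \<forall>n\<ge>N. \<forall>z. cmod (z - complex_of_real xs) \<le> C * real n powr (-1/3 + \<epsilon>) \<longrightarrow>
        cmod (emp_stieltjes x n z
              - (complex_of_real (Gcoef M xs 0)
                 + complex_of_real (Gcoef M xs 1) * (z - complex_of_real xs)
                 + complex_of_real (Gcoef M xs 2) / 2 * (z - complex_of_real xs) ^ 2))
          \<le> K * real n powr (-2/3 - 2 * \<epsilon>)"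
  proof (intro exI allI impI)
    fix n z assume n: "n \<ge> N" and z: "cmod (z - complex_of_real xs) \<le> C * real n powr (-1/3 + \<epsilon>)"
    note su = stp[OF n z]
    define u where "u = z - complex_of_real xs"
    define v where "v = (\<lambda>j. complex_of_real (xs - x n j))"
    define r where "r = C * real n powr (-1/3 + \<epsilon>)"
    have n1: "1 \<le> real n" using su by simp
    have ur: "cmod u \<le> r" using z unfolding u_def r_def .
    have r0: "0 \<le> r" unfolding r_def using C by simp
    have vj: "v j \<noteq> 0" "cmod u \<le> cmod (v j) / 2" "u + v j \<noteq> 0" if "j \<in> {1..n}" for j
      using su that unfolding u_def v_def by auto
    have S: "emp_stieltjes x n z = (\<Sum>j=1..n. 1 / (u + v j)) / of_nat n"
      unfolding emp_stieltjes_def u_def v_def by (simp add: algebra_simps)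
    define E1 where "E1 = (\<Sum>j=1..n. 1 / (xs - x n j)^1) / real n"
    define E2 where "E2 = (\<Sum>j=1..n. 1 / (xs - x n j)^2) / real n"
    define E3 where "E3 = (\<Sum>j=1..n. 1 / (xs - x n j)^3) / real n"
    have cE1: "(\<Sum>j=1..n. 1 / v j) / of_nat n = complex_of_real E1" unfolding E1_def v_def by simp
    have cE2: "(\<Sum>j=1..n. 1 / (v j)^2) / of_nat n = complex_of_real E2" unfolding E2_def v_def by simp
    have cE3: "(\<Sum>j=1..n. 1 / (v j)^3) / of_nat n = complex_of_real E3" unfolding E3_def v_def by simp
    define Dr where "Dr = (\<Sum>j=1..n. u^3 / ((v j)^3 * (u + v j))) / of_nat n"
    have key: "emp_stieltjes x n z
              - (complex_of_real (Gcoef M xs 0)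
                 + complex_of_real (Gcoef M xs 1) * (z - complex_of_real xs)
                 + complex_of_real (Gcoef M xs 2) / 2 * (z - complex_of_real xs) ^ 2)
          = complex_of_real (E1 - I1) - u * complex_of_real (E2 - I2) + u^2 * complex_of_real (E3 - I3) - Dr"
    proof -
      have "emp_stieltjes x n z = (\<Sum>j=1..n. 1 / v j) / of_nat n - u * ((\<Sum>j=1..n. 1 / (v j)^2) / of_nat n)
           + u^2 * ((\<Sum>j=1..n. 1 / (v j)^3) / of_nat n) - Dr"
        unfolding S Dr_def using sum_taylor[of "{1..n}" v u] vj
        by (simp add: diff_divide_distrib add_divide_distrib)
      then show ?thesis unfolding cE1 cE2 cE3 G0 G1 G2 u_def[symmetric]
        by (simp add: algebra_simps)
    qed
    have bD: "cmod Dr \<le> 2 * (r * r * r) * ((\<Sum>j=1..n. 1 / \<bar>xs - x n j\<bar> ^ 4) / real n)"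
    proof -
      have "cmod (\<Sum>j=1..n. u^3 / ((v j)^3 * (u + v j))) \<le> (\<Sum>j=1..n. cmod (u^3 / ((v j)^3 * (u + v j))))"
        by (rule norm_sum)
      also have "\<dots> \<le> (\<Sum>j=1..n. 2 * (r * r * r) * (1 / \<bar>xs - x n j\<bar> ^ 4))"
      proof (rule sum_mono)
        fix j assume j: "j \<in> {1..n}"
        have "cmod (u^3 / ((v j)^3 * (u + v j))) \<le> 2 * cmod u ^ 3 / cmod (v j) ^ 4"
          using rem_bound vj[OF j] by blast
        also have "\<dots> \<le> 2 * (r * r * r) / cmod (v j) ^ 4"
        proof -
          have "cmod u ^ 3 \<le> r ^ 3" using ur by (intro power_mono) auto
          then show ?thesis by (intro divide_right_mono) (auto simp: power3_eq_cube)
        qed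
        also have "\<dots> = 2 * (r * r * r) * (1 / \<bar>xs - x n j\<bar> ^ 4)" unfolding v_def norm_of_real by simp
        finally show "cmod (u^3 / ((v j)^3 * (u + v j))) \<le> 2 * (r * r * r) * (1 / \<bar>xs - x n j\<bar> ^ 4)" .
      qed
      also have "\<dots> = 2 * (r * r * r) * (\<Sum>j=1..n. 1 / \<bar>xs - x n j\<bar> ^ 4)" by (simp add: sum_distrib_left)
      finally show ?thesis unfolding Dr_def using n1
        by (simp add: norm_divide divide_right_mono)
    qed
    have t1: "\<bar>E1 - I1\<bar> \<le> \<bar>K1\<bar> * real n powr (-2/3 - 2 * \<epsilon>)"
    proof (rule single_bd[OF _ x1 _ n1])
      show "\<bar>E1 - I1\<bar> \<le> \<bar>K1\<bar> * real n powr (-1 + real 1 * al)"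
        using K1[of n] n unfolding N_def E1_def I1_def
        by (smt (verit, best) abs_ge_self max.bounded_iff mult_right_mono powr_ge_zero)
    qed simp
    have rb: "r \<le> C * real n powr (-1/3 + \<epsilon>)" unfolding r_def by simp
    have t2: "r * \<bar>E2 - I2\<bar> \<le> (C * \<bar>K2\<bar>) * real n powr (-2/3 - 2 * \<epsilon>)"
    proof (rule prod_bd[OF r0 rb _ _ x2 _ _ n1])
      show "\<bar>E2 - I2\<bar> \<le> \<bar>K2\<bar> * real n powr (-1 + real 2 * al)"
        using K2[of n] n unfolding N_def E2_def I2_def
        by (smt (verit, best) abs_ge_self max.bounded_iff mult_right_mono powr_ge_zero)
    qed (use C in auto)
    have rr: "r * r \<le> (C * C) * real n powr ((-1/3 + \<epsilon>) + (-1/3 + \<epsilon>))"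
      by (rule prod_bd[OF r0 rb r0 rb order_refl _ _ n1]) (use C in auto)
    have t3: "(r * r) * \<bar>E3 - I3\<bar> \<le> ((C * C) * \<bar>K3\<bar>) * real n powr (-2/3 - 2 * \<epsilon>)"
    proof (rule prod_bd[OF _ rr _ _ x3 _ _ n1])
      show "\<bar>E3 - I3\<bar> \<le> \<bar>K3\<bar> * real n powr (-1 + real 3 * al)"
        using K3[of n] n unfolding N_def E3_def I3_def
        by (smt (verit, best) abs_ge_self max.bounded_iff mult_right_mono powr_ge_zero)
    qed (use C r0 in auto)
    have rrr: "r * r * r \<le> (C * C * C) * real n powr (((-1/3 + \<epsilon>) + (-1/3 + \<epsilon>)) + (-1/3 + \<epsilon>))"
      by (rule prod_bd[OF _ rr r0 rb order_refl _ _ n1]) (use C r0 in auto)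
    have Q: "(\<Sum>j=1..n. 1 / \<bar>xs - x n j\<bar> ^ 4) / real n \<le> (m0 powr (p - 1) * A') * real n powr (al * (1 - p))"
      using inv4[OF n] dpow[OF n1] by (simp add: mult_ac)
    have A'0: "0 \<le> A'" unfolding A'_def by simp
    have Q0: "0 \<le> (\<Sum>j=1..n. 1 / \<bar>xs - x n j\<bar> ^ 4) / real n"
      by (intro divide_nonneg_nonneg sum_nonneg) auto
    have t4: "(r * r * r) * ((\<Sum>j=1..n. 1 / \<bar>xs - x n j\<bar> ^ 4) / real n) \<le> ((C * C * C) * (m0 powr (p - 1) * A')) * real n powr (-2/3 - 2 * \<epsilon>)"
      by (rule prod_bd[OF _ rrr Q0 Q x4 _ _ n1]) (use C r0 A'0 in auto)
    have "cmod (complex_of_real (E1 - I1) - u * complex_of_real (E2 - I2) + u^2 * complex_of_real (E3 - I3) - Dr)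
        \<le> \<bar>E1 - I1\<bar> + r * \<bar>E2 - I2\<bar> + (r * r) * \<bar>E3 - I3\<bar> + cmod Dr"
    proof -
      have "cmod (complex_of_real (E1 - I1) - u * complex_of_real (E2 - I2) + u^2 * complex_of_real (E3 - I3) - Dr)
          \<le> cmod (complex_of_real (E1 - I1)) + cmod (u * complex_of_real (E2 - I2)) + cmod (u^2 * complex_of_real (E3 - I3)) + cmod Dr"
        by (rule order_trans[OF norm_triangle_ineq4] add_mono order_refl order_trans[OF norm_triangle_ineq] norm_triangle_ineq4)+
      also have "\<dots> \<le> \<bar>E1 - I1\<bar> + r * \<bar>E2 - I2\<bar> + (r * r) * \<bar>E3 - I3\<bar> + cmod Dr"
      proof -
        have "cmod (u * complex_of_real (E2 - I2)) \<le> r * \<bar>E2 - I2\<bar>"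
          unfolding norm_mult norm_of_real by (rule mult_right_mono[OF ur abs_ge_zero])
        moreover have "cmod (u^2 * complex_of_real (E3 - I3)) \<le> (r * r) * \<bar>E3 - I3\<bar>"
        proof -
          have "cmod u ^ 2 \<le> r ^ 2" using ur by (intro power_mono) auto
          then have "cmod u ^ 2 * \<bar>E3 - I3\<bar> \<le> r ^ 2 * \<bar>E3 - I3\<bar>" by (rule mult_right_mono) simp
          then show ?thesis unfolding norm_mult norm_power norm_of_real by (simp add: power2_eq_square)
        qed
        moreover have "cmod (complex_of_real (E1 - I1)) = \<bar>E1 - I1\<bar>" by (rule norm_of_real)
        ultimately show ?thesis by linarith
      qed
      finally show ?thesis .
    qed
    also have "\<dots> \<le> (\<bar>K1\<bar> + C * \<bar>K2\<bar> + (C * C) * \<bar>K3\<bar> + 2 * ((C * C * C) * (m0 powr (p - 1) * A'))) * real n powr (-2/3 - 2 * \<epsilon>)"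
      using t1 t2 t3 t4 bD by (simp add: distrib_right)
    finally show "cmod (emp_stieltjes x n z
              - (complex_of_real (Gcoef M xs 0)
                 + complex_of_real (Gcoef M xs 1) * (z - complex_of_real xs)
                 + complex_of_real (Gcoef M xs 2) / 2 * (z - complex_of_real xs) ^ 2))
          \<le> (\<bar>K1\<bar> + C * \<bar>K2\<bar> + (C * C) * \<bar>K3\<bar> + 2 * ((C * C * C) * (m0 powr (p - 1) * A'))) * real n powr (-2/3 - 2 * \<epsilon>)"
      unfolding key .
  qed
  have part2: "\<exists>K N. \<forall>n\<ge>N. \<forall>z. cmod (z - complex_of_real xs) \<le> C * real n powr (-1/3 + \<epsilon>) \<longrightarrow>
        cmod (deriv (deriv (emp_stieltjes x n)) z - complex_of_real (Gcoef M xs 2))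
          \<le> K * real n powr (- \<epsilon>)"
  proof (intro exI allI impI)
    fix n z assume n: "n \<ge> N" and z: "cmod (z - complex_of_real xs) \<le> C * real n powr (-1/3 + \<epsilon>)"
    note su = stp[OF n z]
    define u where "u = z - complex_of_real xs"
    define v where "v = (\<lambda>j. complex_of_real (xs - x n j))"
    define r where "r = C * real n powr (-1/3 + \<epsilon>)"
    have n1: "1 \<le> real n" using su by simp
    have ur: "cmod u \<le> r" using z unfolding u_def r_def .
    have r0: "0 \<le> r" unfolding r_def using C by simp
    have vj: "v j \<noteq> 0" "cmod u \<le> cmod (v j) / 2" "u + v j \<noteq> 0" if "j \<in> {1..n}" for j
      using su that unfolding u_def v_def by auto
    have dd: "deriv (deriv (emp_stieltjes x n)) z = 2 * (\<Sum>j=1..n. 1 / (z - complex_of_real (x n j))^3) / of_nat n"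
      by (rule deriv2_emp[where d = "m0 * real n powr (- al)"]) (use su in auto)
    define E3 where "E3 = (\<Sum>j=1..n. 1 / (xs - x n j)^3) / real n"
    have cE3: "(\<Sum>j=1..n. 1 / (v j)^3) / of_nat n = complex_of_real E3" unfolding E3_def v_def by simp
    define Df where "Df = (\<Sum>j=1..n. 1 / (u + v j)^3 - 1 / (v j)^3) / of_nat n"
    have key: "deriv (deriv (emp_stieltjes x n)) z - complex_of_real (Gcoef M xs 2)
       = 2 * complex_of_real (E3 - I3) + 2 * Df"
    proof -
      have e: "(\<Sum>j=1..n. 1 / (z - complex_of_real (x n j))^3) = (\<Sum>j=1..n. 1 / (v j)^3) + (\<Sum>j=1..n. 1 / (u + v j)^3 - 1 / (v j)^3)"
        unfolding u_def v_def by (simp add: sum_subtractf algebra_simps)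
      have nz: "(of_nat n :: complex) \<noteq> 0" using n1 by simp
      have c3: "(\<Sum>j=1..n. 1 / (v j)^3) = complex_of_real E3 * of_nat n" using cE3 nz by (simp add: field_simps)
      show ?thesis unfolding dd e G2 Df_def c3 using nz
        by (simp add: field_simps)
    qed
    have bD: "cmod Df \<le> 40 * r * ((\<Sum>j=1..n. 1 / \<bar>xs - x n j\<bar> ^ 4) / real n)"
    proof -
      have "cmod (\<Sum>j=1..n. 1 / (u + v j)^3 - 1 / (v j)^3) \<le> (\<Sum>j=1..n. cmod (1 / (u + v j)^3 - 1 / (v j)^3))"
        by (rule norm_sum)
      also have "\<dots> \<le> (\<Sum>j=1..n. 40 * r * (1 / \<bar>xs - x n j\<bar> ^ 4))"
      proof (rule sum_mono)
        fix j assume j: "j \<in> {1..n}"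
        have "cmod (1 / (u + v j)^3 - 1 / (v j)^3) \<le> 40 * cmod u / cmod (v j) ^ 4"
          using d3_bound vj[OF j] by blast
        also have "\<dots> \<le> 40 * r / cmod (v j) ^ 4"
          using ur by (intro divide_right_mono) auto
        also have "\<dots> = 40 * r * (1 / \<bar>xs - x n j\<bar> ^ 4)" unfolding v_def norm_of_real by simp
        finally show "cmod (1 / (u + v j)^3 - 1 / (v j)^3) \<le> 40 * r * (1 / \<bar>xs - x n j\<bar> ^ 4)" .
      qed
      also have "\<dots> = 40 * r * (\<Sum>j=1..n. 1 / \<bar>xs - x n j\<bar> ^ 4)" by (simp add: sum_distrib_left)
      finally show ?thesis unfolding Df_def using n1
        by (simp add: norm_divide divide_right_mono)
    qed
    have t1: "2 * \<bar>E3 - I3\<bar> \<le> (2 * \<bar>K3\<bar>) * real n powr (- \<epsilon>)"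
    proof -
      have "\<bar>E3 - I3\<bar> \<le> \<bar>K3\<bar> * real n powr (- \<epsilon>)"
      proof (rule single_bd[OF _ y1 _ n1])
        show "\<bar>E3 - I3\<bar> \<le> \<bar>K3\<bar> * real n powr (-1 + real 3 * al)"
          using K3[of n] n unfolding N_def E3_def I3_def
          by (smt (verit, best) abs_ge_self max.bounded_iff mult_right_mono powr_ge_zero)
      qed simp
      then show ?thesis by simp
    qed
    have rb: "r \<le> C * real n powr (-1/3 + \<epsilon>)" unfolding r_def by simp
    have Q: "(\<Sum>j=1..n. 1 / \<bar>xs - x n j\<bar> ^ 4) / real n \<le> (m0 powr (p - 1) * A') * real n powr (al * (1 - p))"
      using inv4[OF n] dpow[OF n1] by (simp add: mult_ac)
    have A'0: "0 \<le> A'" unfolding A'_def by simp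
    have Q0: "0 \<le> (\<Sum>j=1..n. 1 / \<bar>xs - x n j\<bar> ^ 4) / real n"
      by (intro divide_nonneg_nonneg sum_nonneg) auto
    have t2: "r * ((\<Sum>j=1..n. 1 / \<bar>xs - x n j\<bar> ^ 4) / real n) \<le> (C * (m0 powr (p - 1) * A')) * real n powr (- \<epsilon>)"
      by (rule prod_bd[OF r0 rb Q0 Q y2 _ _ n1]) (use C A'0 in auto)
    have "cmod (2 * complex_of_real (E3 - I3) + 2 * Df) \<le> 2 * \<bar>E3 - I3\<bar> + 2 * cmod Df"
    proof -
      have "cmod (2 * complex_of_real (E3 - I3) + 2 * Df) \<le> cmod (2 * complex_of_real (E3 - I3)) + cmod (2 * Df)"
        by (rule norm_triangle_ineq)
      moreover have "cmod (2 * complex_of_real (E3 - I3)) = 2 * \<bar>E3 - I3\<bar>"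
        unfolding norm_mult norm_of_real by simp
      moreover have "cmod (2 * Df) = 2 * cmod Df" unfolding norm_mult by simp
      ultimately show ?thesis by linarith
    qed
    also have "\<dots> \<le> (2 * \<bar>K3\<bar> + 80 * (C * (m0 powr (p - 1) * A'))) * real n powr (- \<epsilon>)"
      using t1 t2 bD by (simp add: distrib_right)
    finally show "cmod (deriv (deriv (emp_stieltjes x n)) z - complex_of_real (Gcoef M xs 2))
          \<le> (2 * \<bar>K3\<bar> + 80 * (C * (m0 powr (p - 1) * A'))) * real n powr (- \<epsilon>)"
      unfolding key .
  qed
  show ?thesis using part1 part2 by blast
qed

end

theorem proposition2p1:
  fixes x :: "nat \<Rightarrow> nat \<Rightarrow> real"
    and M :: "real measure" and \<psi> :: "real \<Rightarrow> real"
    and xs c \<kappa> \<epsilon> :: real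
  assumes \<comment> \<open>Assumption 1\<close>
    A1_bdd: "\<exists>B. \<forall>n j. 1 \<le> j \<and> j \<le> n \<longrightarrow> \<bar>x n j\<bar> \<le> B"
    and A1_prob: "prob_space M"
    and A1_dens: "M = density lborel (\<lambda>t. ennreal (\<psi> t))"
    and A1_meas: "\<psi> \<in> borel_measurable borel"
    and A1_nonneg: "\<And>t. \<psi> t \<ge> 0"
    and A1_weak: "emp_weak_conv x M"
    and A1_cont: "continuous_on (msupp M) \<psi>"
    and A1_c: "c > 0"
    and A1_asymp: "\<psi> \<sim>[at xs] (\<lambda>t. c * \<bar>t - xs\<bar> powr \<kappa>)"
    and \<comment> \<open>Assumption 2\<close>
    A2: "\<exists>M0 n0. \<forall>n\<ge>n0. \<forall>t. \<bar>emp_cdf x n t - measure M {..t}\<bar> \<le> M0 / real n"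
    and \<comment> \<open>Assumption 3\<close>
    A3: "\<exists>m0>0. \<exists>n0. \<forall>n\<ge>n0. \<forall>j\<in>{1..n}.
           x n j \<notin> {xs - m0 * real n powr (-1/(\<kappa>+1)) .. xs + m0 * real n powr (-1/(\<kappa>+1))}"
    and kappa: "\<kappa> > 2"
    and eps_pos: "0 < \<epsilon>"
    and eps_bd: "\<epsilon> < min ((\<kappa> - 2) / (6 * (\<kappa> + 1))) (1/15)"
  shows "\<forall>C>0.
     (\<exists>K N. \<forall>n\<ge>N. \<forall>z. cmod (z - complex_of_real xs) \<le> C * real n powr (-1/3 + \<epsilon>) \<longrightarrow>
        cmod (emp_stieltjes x n z
              - (complex_of_real (Gcoef M xs 0)
                 + complex_of_real (Gcoef M xs 1) * (z - complex_of_real xs)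
                 + complex_of_real (Gcoef M xs 2) / 2 * (z - complex_of_real xs) ^ 2))
          \<le> K * real n powr (-2/3 - 2 * \<epsilon>)) \<and>
     (\<exists>K N. \<forall>n\<ge>N. \<forall>z. cmod (z - complex_of_real xs) \<le> C * real n powr (-1/3 + \<epsilon>) \<longrightarrow>
        cmod (deriv (deriv (emp_stieltjes x n)) z - complex_of_real (Gcoef M xs 2))
          \<le> K * real n powr (- \<epsilon>))"
proof -
  obtain B0 where B0: "\<And>n j. j \<in> {1..n} \<Longrightarrow> \<bar>x n j\<bar> \<le> B0" using A1_bdd by auto
  obtain M0 n0 where M0: "\<And>n t. n \<ge> n0 \<Longrightarrow> \<bar>emp_cdf x n t - measure M {..t}\<bar> \<le> M0 / real n"
    using A2 by blast
  obtain m0 n1 where m0: "m0 > 0" and gapA: "\<And>n j. n \<ge> n1 \<Longrightarrow> j \<in> {1..n} \<Longrightarrow>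
        x n j \<notin> {xs - m0 * real n powr (-1/(\<kappa>+1)) .. xs + m0 * real n powr (-1/(\<kappa>+1))}"
    using A3 by blast
  obtain \<rho> where rho: "\<rho> > 0" and near: "\<And>t. t \<noteq> xs \<Longrightarrow> \<bar>t - xs\<bar> < \<rho> \<Longrightarrow> \<psi> t \<le> 2 * c * \<bar>t - xs\<bar> powr \<kappa>"
  proof -
    have lim: "((\<lambda>t. if \<psi> t = 0 \<and> c * \<bar>t - xs\<bar> powr \<kappa> = 0 then 1 else \<psi> t / (c * \<bar>t - xs\<bar> powr \<kappa>)) \<longlongrightarrow> 1) (at xs)"
      by (rule asymp_equivD[OF A1_asymp])
    have "eventually (\<lambda>t. (if \<psi> t = 0 \<and> c * \<bar>t - xs\<bar> powr \<kappa> = 0 then 1 else \<psi> t / (c * \<bar>t - xs\<bar> powr \<kappa>)) < 2) (at xs)"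
      using lim by (rule order_tendstoD) simp
    then obtain d where d: "d > 0" and dd: "\<And>t. t \<noteq> xs \<Longrightarrow> dist t xs < d \<Longrightarrow>
        (if \<psi> t = 0 \<and> c * \<bar>t - xs\<bar> powr \<kappa> = 0 then 1 else \<psi> t / (c * \<bar>t - xs\<bar> powr \<kappa>)) < 2"
      unfolding eventually_at by auto
    have "\<psi> t \<le> 2 * c * \<bar>t - xs\<bar> powr \<kappa>" if t: "t \<noteq> xs" "\<bar>t - xs\<bar> < d" for t
    proof -
      have pos: "0 < c * \<bar>t - xs\<bar> powr \<kappa>" using A1_c t by simp
      have "\<psi> t / (c * \<bar>t - xs\<bar> powr \<kappa>) < 2" using dd[of t] t pos A1_c by (simp add: dist_real_def)
      then show ?thesis using pos by (simp add: divide_less_eq)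
    qed
    then show ?thesis using that d by blast
  qed
  define N0 where "N0 = max (max n0 n1) 1"
  interpret L x M \<psi> xs c \<kappa> B0 "\<bar>M0\<bar>" m0 \<rho> N0
  proof (rule L.intro)
    show "prob_space M" by (rule A1_prob)
    show "M = density lborel (\<lambda>t. ennreal (\<psi> t))" by (rule A1_dens)
    show "\<psi> \<in> borel_measurable borel" by (rule A1_meas)
    show "\<And>t. 0 \<le> \<psi> t" by (rule A1_nonneg)
    show "0 < c" by (rule A1_c)
    show "\<And>n j. j \<in> {1..n} \<Longrightarrow> \<bar>x n j\<bar> \<le> B0" by (rule B0)
    show "\<bar>emp_cdf x n t - measure M {..t}\<bar> \<le> \<bar>M0\<bar> / real n" if "N0 \<le> n" for n t
    proof -
      have "n \<ge> n0" using that unfolding N0_def by simp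
      from M0[OF this, of t] show ?thesis by (smt (verit, best) abs_ge_self divide_right_mono of_nat_0_le_iff)
    qed
    show "0 \<le> \<bar>M0\<bar>" by simp
    show "1 \<le> N0" unfolding N0_def by simp
    show "0 < m0" by (rule m0)
    show "x n j \<notin> {xs - m0 * real n powr (-1/(\<kappa>+1)) .. xs + m0 * real n powr (-1/(\<kappa>+1))}"
      if "N0 \<le> n" "j \<in> {1..n}" for n j
      using gapA[of n j] that unfolding N0_def by simp
    show "0 < \<rho>" by (rule rho)
    show "\<And>t. t \<noteq> xs \<Longrightarrow> \<bar>t - xs\<bar> < \<rho> \<Longrightarrow> \<psi> t \<le> 2 * c * \<bar>t - xs\<bar> powr \<kappa>" by (rule near)
    show "2 < \<kappa>" by (rule kappa)
  qed
  show ?thesis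
    using final[OF eps_pos eps_bd] by blast
qed

end
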